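(* In the single-user model below, take $\bm\delta=\mathbf 0$ (all antennas use one-bit ADCs) and fix the channel vectors with $\bm\lambda_n\neq\mathbf 0$ for all $n$. Let $\bar{\bm\lambda}=[\bm\lambda_1^t/\|\bm\lambda_1\|,\dots,\bm\lambda_N^t/\|\bm\lambda_N\|]^t\in\mathbb C^{NQ}$ and $\bar{\mathbf D}=\lim_{\mathcal E_{\mathrm s}\to\infty}\mathbf D$. Then $$\lim_{\mathcal E_{\mathrm s}\to\infty}\Delta(\mathbf w_{\mathrm{opt}},\bm\delta)=\frac2\pi\,\bar{\bm\lambda}^t\bar{\mathbf D}^{-1}\bar{\bm\lambda}^*.$$
   Context: Single-user model: $N,Q\ge1$, $1\le T\le Q$, $\mathbf h_n=[h_{n1},\dots,h_{nT},0,\dots,0]^t\in\mathbb C^Q$, $\mathbf F$ the $Q\times Q$ unitary DFT matrix, $\bm\lambda_n=\sqrt Q\mathbf F\mathbf h_n$, $\mathbf C_n=\mathbf F^\dagger\mathrm{diag}(\bm\lambda_n)\mathbf F$, $\tilde{\mathbf x}\sim\mathcal{CN}(\mathbf 0,\mathcal E_{\mathrm s}\mathbf I_Q)$, $\mathbf x=\mathbf F^\dagger\tilde{\mathbf x}$, $\mathbf z_n\sim\mathcal{CN}(\mathbf 0,\mathbf I_Q)$ all independent, $\mathbf y_n=\mathbf C_n\mathbf x+\mathbf z_n$; with $\bm\delta=\mathbf 0$, $\mathbf r_n=\mathrm{sgn}(\mathbf y_n)$ where $\mathrm{sgn}(x)=\frac1{\sqrt2}[\mathrm{sgn}(x_{\mathrm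 R})+j\,\mathrm{sgn}(x_{\mathrm I})]$ componentwise. For $\mathbf w=[\mathbf w_1^t,\dots,\mathbf w_N^t]^t$, $\hat{\tilde{\mathbf x}}=\sum_n\mathrm{diag}(\mathbf w_n)\mathbf F\mathbf r_n$, $\Delta(\mathbf w,\bm\delta)=|\mathbb E[\hat{\tilde{\mathbf x}}^\dagger\tilde{\mathbf x}]|^2/(Q\mathcal E_{\mathrm s}\mathbb E[\hat{\tilde{\mathbf x}}^\dagger\hat{\tilde{\mathbf x}}])$, $\mathbf w_{\mathrm{opt}}$ maximizes $\Delta(\cdot,\bm\delta)$. $\mathbf R_{nm}=\mathbb E[\mathbf r_n\mathbf r_m^\dagger]$; $\mathbf D_{nm}$ is the $Q\times Q$ diagonal matrix with $(\mathbf D_{nm})_{qq}=(\mathbf F\mathbf R_{nm}\mathbf F^\dagger)_{qq}$; $\mathbf D$ is the $NQ\times NQ$ block matrix whose $(i,k)$-th block is $\mathbf D_{ki}$ (it depends on $\mathcal E_{\mathrm s}$). *)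

theory Defs
  imports "HOL-Probability.Probability"
begin

text \<open>Vectors in C^Q are functions nat => complex (indices 0..Q-1),
  Q x Q matrices are functions nat => nat => complex.  Antennas are indexed 0..N-1.\<close>

definition dft :: "nat \<Rightarrow> nat \<Rightarrow> nat \<Rightarrow> complex" where
  "dft Q p q = cis (- 2 * pi * real p * real q / real Q) / complex_of_real (sqrt (real Q))"

definition dft_adj :: "nat \<Rightarrow> nat \<Rightarrow> nat \<Rightarrow> complex" where
  "dft_adj Q p q = cnj (dft Q q p)"

definition matvec :: "nat \<Rightarrow> (nat \<Rightarrow> nat \<Rightarrow> complex) \<Rightarrow> (nat \<Rightarrow> complex) \<Rightarrow> nat \<Rightarrow> complex" where
  "matvec Q A v = (\<lambda>p. \<Sum>q<Q. A p q * v q)"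

definition matmul :: "nat \<Rightarrow> (nat \<Rightarrow> nat \<Rightarrow> complex) \<Rightarrow> (nat \<Rightarrow> nat \<Rightarrow> complex) \<Rightarrow> nat \<Rightarrow> nat \<Rightarrow> complex" where
  "matmul Q A B = (\<lambda>p q. \<Sum>k<Q. A p k * B k q)"

definition diagm :: "(nat \<Rightarrow> complex) \<Rightarrow> nat \<Rightarrow> nat \<Rightarrow> complex" where
  "diagm v = (\<lambda>p q. if p = q then v p else 0)"

definition hpad :: "nat \<Rightarrow> (nat \<Rightarrow> nat \<Rightarrow> complex) \<Rightarrow> nat \<Rightarrow> nat \<Rightarrow> complex" where
  "hpad T h n q = (if q < T then h n q else 0)"

definition lam :: "nat \<Rightarrow> nat \<Rightarrow> (nat \<Rightarrow> nat \<Rightarrow> complex) \<Rightarrow> nat \<Rightarrow> nat \<Rightarrow> complex" where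
  "lam Q T h n = (\<lambda>p. complex_of_real (sqrt (real Q)) * matvec Q (dft Q) (hpad T h n) p)"

definition circ :: "nat \<Rightarrow> nat \<Rightarrow> (nat \<Rightarrow> nat \<Rightarrow> complex) \<Rightarrow> nat \<Rightarrow> nat \<Rightarrow> nat \<Rightarrow> complex" where
  "circ Q T h n = matmul Q (dft_adj Q) (matmul Q (diagm (lam Q T h n)) (dft Q))"

definition csgn :: "complex \<Rightarrow> complex" where
  "csgn z = Complex (sgn (Re z)) (sgn (Im z)) / complex_of_real (sqrt 2)"

text \<open>Probability space: i.i.d. standard real Gaussians g(k,q,b), k \<le> N, q < Q, b :: bool.
  k = 0 gives the signal x~ (real/imag parts), k = n+1 the noise z_n of antenna n.\<close>
definition std_normal :: "real measure" where
  "std_normal = density lborel std_normal_density"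

definition Omega :: "nat \<Rightarrow> nat \<Rightarrow> (nat \<times> nat \<times> bool \<Rightarrow> real) measure" where
  "Omega N Q = PiM ({..N} \<times> {..<Q} \<times> UNIV) (\<lambda>_. std_normal)"

text \<open>x~ ~ CN(0, Es I_Q): real and imaginary parts are N(0, Es/2).\<close>
definition xt :: "real \<Rightarrow> (nat \<times> nat \<times> bool \<Rightarrow> real) \<Rightarrow> nat \<Rightarrow> complex" where
  "xt Es \<omega> q = complex_of_real (sqrt (Es / 2)) * Complex (\<omega> (0, q, True)) (\<omega> (0, q, False))"

definition noise :: "(nat \<times> nat \<times> bool \<Rightarrow> real) \<Rightarrow> nat \<Rightarrow> nat \<Rightarrow> complex" where
  "noise \<omega> n q = complex_of_real (sqrt (1 / 2)) * Complex (\<omega> (Suc n, q, True)) (\<omega> (Suc n, q, False))"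

definition xsig :: "nat \<Rightarrow> real \<Rightarrow> (nat \<times> nat \<times> bool \<Rightarrow> real) \<Rightarrow> nat \<Rightarrow> complex" where
  "xsig Q Es \<omega> = matvec Q (dft_adj Q) (xt Es \<omega>)"

definition yrx :: "nat \<Rightarrow> nat \<Rightarrow> (nat \<Rightarrow> nat \<Rightarrow> complex) \<Rightarrow> real \<Rightarrow> (nat \<times> nat \<times> bool \<Rightarrow> real) \<Rightarrow> nat \<Rightarrow> nat \<Rightarrow> complex" where
  "yrx Q T h Es \<omega> n = (\<lambda>p. matvec Q (circ Q T h n) (xsig Q Es \<omega>) p + noise \<omega> n p)"

definition rq :: "nat \<Rightarrow> nat \<Rightarrow> (nat \<Rightarrow> nat \<Rightarrow> complex) \<Rightarrow> real \<Rightarrow> (nat \<times> nat \<times> bool \<Rightarrow> real) \<Rightarrow> nat \<Rightarrow> nat \<Rightarrow> complex" where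
  "rq Q T h Es \<omega> n = (\<lambda>p. csgn (yrx Q T h Es \<omega> n p))"

definition xhat :: "nat \<Rightarrow> nat \<Rightarrow> nat \<Rightarrow> (nat \<Rightarrow> nat \<Rightarrow> complex) \<Rightarrow> real \<Rightarrow> (nat \<Rightarrow> nat \<Rightarrow> complex)
    \<Rightarrow> (nat \<times> nat \<times> bool \<Rightarrow> real) \<Rightarrow> nat \<Rightarrow> complex" where
  "xhat N Q T h Es w \<omega> = (\<lambda>p. \<Sum>n<N. w n p * matvec Q (dft Q) (rq Q T h Es \<omega> n) p)"

definition Delta :: "nat \<Rightarrow> nat \<Rightarrow> nat \<Rightarrow> (nat \<Rightarrow> nat \<Rightarrow> complex) \<Rightarrow> real \<Rightarrow> (nat \<Rightarrow> nat \<Rightarrow> complex) \<Rightarrow> real" where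
  "Delta N Q T h Es w =
     (cmod (integral\<^sup>L (Omega N Q) (\<lambda>\<omega>. \<Sum>p<Q. cnj (xhat N Q T h Es w \<omega> p) * xt Es \<omega> p)))\<^sup>2
     / (real Q * Es * integral\<^sup>L (Omega N Q) (\<lambda>\<omega>. \<Sum>p<Q. (cmod (xhat N Q T h Es w \<omega> p))\<^sup>2))"

definition Rmat :: "nat \<Rightarrow> nat \<Rightarrow> nat \<Rightarrow> (nat \<Rightarrow> nat \<Rightarrow> complex) \<Rightarrow> real \<Rightarrow> nat \<Rightarrow> nat \<Rightarrow> nat \<Rightarrow> nat \<Rightarrow> complex" where
  "Rmat N Q T h Es n m = (\<lambda>p q. integral\<^sup>L (Omega N Q) (\<lambda>\<omega>. rq Q T h Es \<omega> n p * cnj (rq Q T h Es \<omega> m q)))"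

definition Dblk :: "nat \<Rightarrow> nat \<Rightarrow> nat \<Rightarrow> (nat \<Rightarrow> nat \<Rightarrow> complex) \<Rightarrow> real \<Rightarrow> nat \<Rightarrow> nat \<Rightarrow> nat \<Rightarrow> nat \<Rightarrow> complex" where
  "Dblk N Q T h Es n m = diagm (\<lambda>q. matmul Q (matmul Q (dft Q) (Rmat N Q T h Es n m)) (dft_adj Q) q q)"

text \<open>The NQ x NQ matrix D: row index i*Q+p, column index k*Q+q; the (i,k)-th block is D_{ki}.\<close>
definition Dmat :: "nat \<Rightarrow> nat \<Rightarrow> nat \<Rightarrow> (nat \<Rightarrow> nat \<Rightarrow> complex) \<Rightarrow> real \<Rightarrow> nat \<Rightarrow> nat \<Rightarrow> complex" where
  "Dmat N Q T h Es a b = Dblk N Q T h Es (b div Q) (a div Q) (a mod Q) (b mod Q)"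

definition is_inverse :: "nat \<Rightarrow> (nat \<Rightarrow> nat \<Rightarrow> complex) \<Rightarrow> (nat \<Rightarrow> nat \<Rightarrow> complex) \<Rightarrow> bool" where
  "is_inverse K A B \<longleftrightarrow>
     (\<forall>i<K. \<forall>j<K. (\<Sum>k<K. A i k * B k j) = (if i = j then 1 else 0)) \<and>
     (\<forall>i<K. \<forall>j<K. (\<Sum>k<K. B i k * A k j) = (if i = j then 1 else 0))"

definition invertible_sq :: "nat \<Rightarrow> (nat \<Rightarrow> nat \<Rightarrow> complex) \<Rightarrow> bool" where
  "invertible_sq K A \<longleftrightarrow> (\<exists>B. is_inverse K A B)"

definition inv_sq :: "nat \<Rightarrow> (nat \<Rightarrow> nat \<Rightarrow> complex) \<Rightarrow> nat \<Rightarrow> nat \<Rightarrow> complex" where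
  "inv_sq K A = (\<lambda>i j. if i < K \<and> j < K then (SOME B. is_inverse K A B) i j else 0)"

definition vnorm :: "nat \<Rightarrow> (nat \<Rightarrow> complex) \<Rightarrow> real" where
  "vnorm Q v = sqrt (\<Sum>q<Q. (cmod (v q))\<^sup>2)"

definition lambar :: "nat \<Rightarrow> nat \<Rightarrow> (nat \<Rightarrow> nat \<Rightarrow> complex) \<Rightarrow> nat \<Rightarrow> complex" where
  "lambar Q T h a = lam Q T h (a div Q) (a mod Q) / complex_of_real (vnorm Q (lam Q T h (a div Q)))"

end

theory Submission
  imports Defs
begin

lemma prob_std_normal: "prob_space std_normal"
  unfolding std_normal_def using prob_space_normal_density by simp

lemma std_normal_integral:
  fixes f :: "real \<Rightarrow> real"
  assumes [measurable]: "f \<in> borel_measurable borel"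
  shows "integral\<^sup>L std_normal f = (\<integral>x. std_normal_density x * f x \<partial>lborel)"
  unfolding std_normal_def by (subst integral_density) auto

lemma gauss_exp_identity:
  fixes \<alpha> s a t :: real
  assumes "\<alpha> > 0"
  defines "bb \<equiv> 1 + 2*\<alpha>*a\<^sup>2"
  shows "std_normal_density t * exp (-\<alpha>*(s + a*t)\<^sup>2)
    = (exp (-\<alpha>* s\<^sup>2/bb) / sqrt bb) * normal_density (-2*\<alpha>*a* s/bb) (1/sqrt bb) t"
proof -
  have b: "bb > 0" unfolding bb_def using assms by (simp add: add_pos_nonneg)
  have sq: "(1/sqrt bb)\<^sup>2 = 1/bb" using b by (simp add: power_divide)
  have poly: "bb*t\<^sup>2 + 2*\<alpha>*bb*(s+a*t)\<^sup>2 = 2*\<alpha>* s\<^sup>2 + (bb*t + 2*\<alpha>*a* s)\<^sup>2"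
    unfolding bb_def by (simp add: power2_eq_square algebra_simps)
  have h1: "-t\<^sup>2/2 + (-\<alpha>*(s + a*t)\<^sup>2) = -(bb*t\<^sup>2 + 2*\<alpha>*bb*(s+a*t)\<^sup>2)/(2*bb)"
  proof -
    define Z where "Z = t\<^sup>2 + 2*\<alpha>*(s+a*t)\<^sup>2"
    have z1: "bb*t\<^sup>2 + 2*\<alpha>*bb*(s+a*t)\<^sup>2 = bb*Z" unfolding Z_def by (simp add: algebra_simps)
    have z2: "(bb*Z)/(2*bb) = Z/2" using b by simp
    have z3: "-t\<^sup>2/2 + (-\<alpha>*(s + a*t)\<^sup>2) = -(Z/2)" unfolding Z_def by (simp add: algebra_simps)
    show ?thesis using z3 by (simp only: z1 minus_divide_left[symmetric] z2)
  qed
  have h2: "(t - (-2*\<alpha>*a* s/bb)) = (bb*t + 2*\<alpha>*a* s) / bb"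
    using b by (simp add: field_simps)
  have h3: "-(t - (-2*\<alpha>*a* s/bb))\<^sup>2 / (2*(1/bb)) = -(bb*t + 2*\<alpha>*a* s)\<^sup>2 / (2*bb)"
    unfolding h2 using b by (simp add: power_divide power2_eq_square)
  have e0: "-t\<^sup>2/2 + (-\<alpha>*(s + a*t)\<^sup>2) = -\<alpha>* s\<^sup>2/bb + (-(t - (-2*\<alpha>*a* s/bb))\<^sup>2 / (2*(1/bb)))"
    unfolding h1 h3 poly using b by (simp add: add_divide_distrib diff_divide_distrib)
  have e: "-t\<^sup>2/2 + (-\<alpha>*(s + a*t)\<^sup>2) = -\<alpha>* s\<^sup>2/bb + (-(t - (-2*\<alpha>*a* s/bb))\<^sup>2 / (2*(1/sqrt bb)\<^sup>2))"
    using e0 sq by simp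
  have "std_normal_density t * exp (-\<alpha>*(s + a*t)\<^sup>2) = (1/sqrt(2*pi)) * exp (-t\<^sup>2/2 + (-\<alpha>*(s + a*t)\<^sup>2))"
    by (simp only: std_normal_density_def exp_add mult.assoc)
  also have "\<dots> = (1/sqrt(2*pi)) * exp (-\<alpha>* s\<^sup>2/bb) * exp (-(t - (-2*\<alpha>*a* s/bb))\<^sup>2 / (2*(1/sqrt bb)\<^sup>2))"
    by (simp only: e exp_add mult.assoc)
  also have "\<dots> = (exp (-\<alpha>* s\<^sup>2/bb) / sqrt bb) * normal_density (-2*\<alpha>*a* s/bb) (1/sqrt bb) t"
    using b by (simp add: normal_density_def real_sqrt_mult real_sqrt_divide power_divide field_simps)
  finally show ?thesis .
qed

lemma int_exp_shift:
  fixes \<alpha> s a :: real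
  assumes "\<alpha> > 0"
  shows "(\<integral>t. exp (-\<alpha>*(s + a*t)\<^sup>2) \<partial>std_normal) = exp (-\<alpha>* s\<^sup>2/(1 + 2*\<alpha>*a\<^sup>2)) / sqrt (1 + 2*\<alpha>*a\<^sup>2)"
proof -
  let ?bb = "1 + 2*\<alpha>*a\<^sup>2"
  have "(\<integral>t. exp (-\<alpha>*(s + a*t)\<^sup>2) \<partial>std_normal) = (\<integral>t. std_normal_density t * exp (-\<alpha>*(s + a*t)\<^sup>2) \<partial>lborel)"
    by (rule std_normal_integral) simp
  also have "\<dots> = (\<integral>t. (exp (-\<alpha>* s\<^sup>2/?bb) / sqrt ?bb) * normal_density (-2*\<alpha>*a* s/?bb) (1/sqrt ?bb) t \<partial>lborel)"
    using gauss_exp_identity[OF assms] by simp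
  also have "\<dots> = exp (-\<alpha>* s\<^sup>2/?bb) / sqrt ?bb"
  proof -
    have "?bb > 0" using assms by (simp add: add_pos_nonneg)
    then have "1/sqrt ?bb > 0" by simp
    then show ?thesis by (simp add: integral_normal_density)
  qed
  finally show ?thesis .
qed


lemma sigma_finite_std_normal: "sigma_finite_measure std_normal"
  using prob_std_normal prob_space_imp_sigma_finite by blast

interpretation SN: product_sigma_finite "\<lambda>_::'i. std_normal"
  by unfold_locales (use sigma_finite_std_normal in \<open>unfold sigma_finite_measure_def, blast\<close>)

lemma sets_std_normal[measurable_cong, simp]: "sets std_normal = sets borel"
  by (simp add: std_normal_def)

lemma meas_comp_PiM[measurable]:
  "i \<in> J \<Longrightarrow> (\<lambda>\<omega>. \<omega> i) \<in> borel_measurable (PiM J (\<lambda>_. std_normal))"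
  using measurable_component_singleton[of i J "\<lambda>_. std_normal"]
  by (simp add: measurable_def)

lemma meas_lin_PiM[measurable]:
  fixes a :: "'i \<Rightarrow> real"
  shows "(\<lambda>\<omega>. \<Sum>i\<in>J. a i * \<omega> i) \<in> borel_measurable (PiM J (\<lambda>_. std_normal))"
  by (rule borel_measurable_sum) (auto intro!: borel_measurable_times meas_comp_PiM)

lemma prob_PiM_std: "prob_space (PiM J (\<lambda>_. std_normal))"
  by (rule prob_space_PiM) (rule prob_std_normal)

lemma integrable_bounded_PiM:
  fixes f :: "('i \<Rightarrow> real) \<Rightarrow> 'b::{banach, second_countable_topology}"
  assumes "f \<in> borel_measurable (PiM J (\<lambda>_. std_normal))" "\<And>x. norm (f x) \<le> B"
  shows "integrable (PiM J (\<lambda>_. std_normal)) f"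
proof -
  interpret P: prob_space "PiM J (\<lambda>_. std_normal)" by (rule prob_PiM_std)
  show ?thesis using assms by (intro P.integrable_const_bound[where B=B]) auto
qed

lemma exp_sum_PiM:
  fixes a :: "'i \<Rightarrow> real"
  assumes "finite J" "\<alpha> > 0"
  shows "(\<integral>\<omega>. exp (-\<alpha>*(s + (\<Sum>i\<in>J. a i * \<omega> i))\<^sup>2) \<partial>PiM J (\<lambda>_. std_normal))
     = exp (-\<alpha>* s\<^sup>2/(1 + 2*\<alpha>*(\<Sum>i\<in>J. (a i)\<^sup>2))) / sqrt (1 + 2*\<alpha>*(\<Sum>i\<in>J. (a i)\<^sup>2))"
  using assms
proof (induction J arbitrary: s \<alpha> rule: finite_induct)
  case empty
  show ?case by (simp add: PiM_empty)
next
  case (insert i J)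
  let ?A = "\<Sum>k\<in>J. (a k)\<^sup>2"
  define bb where "bb = 1 + 2*\<alpha>*(a i)\<^sup>2"
  have b: "bb > 0" unfolding bb_def using insert.prems by (simp add: add_pos_nonneg)
  have A0: "?A \<ge> 0" by (simp add: sum_nonneg)
  have int: "integrable (PiM (insert i J) (\<lambda>_. std_normal)) (\<lambda>\<omega>. exp (-\<alpha>*(s + (\<Sum>k\<in>insert i J. a k * \<omega> k))\<^sup>2))"
    by (rule integrable_bounded_PiM[where B=1]) (use insert.prems in auto)
  have "(\<integral>\<omega>. exp (-\<alpha>*(s + (\<Sum>k\<in>insert i J. a k * \<omega> k))\<^sup>2) \<partial>PiM (insert i J) (\<lambda>_. std_normal))
     = (\<integral>x. (\<integral>y. exp (-\<alpha>*(s + (\<Sum>k\<in>insert i J. a k * (x(i:=y)) k))\<^sup>2) \<partial>std_normal) \<partial>PiM J (\<lambda>_. std_normal))"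
    by (rule SN.product_integral_insert[OF insert.hyps int])
  also have "\<dots> = (\<integral>x. exp (-(\<alpha>/bb)*(s + (\<Sum>k\<in>J. a k * x k))\<^sup>2) / sqrt bb \<partial>PiM J (\<lambda>_. std_normal))"
  proof (rule Bochner_Integration.integral_cong[OF refl])
    fix x assume "x \<in> space (PiM J (\<lambda>_. std_normal))"
    have sm: "(\<Sum>k\<in>insert i J. a k * (x(i:=y)) k) = a i * y + (\<Sum>k\<in>J. a k * x k)" for y
    proof -
      have "(\<Sum>k\<in>J. a k * (x(i:=y)) k) = (\<Sum>k\<in>J. a k * x k)"
        using insert.hyps by (intro sum.cong) auto
      then show ?thesis using insert.hyps by simp
    qed
    have "(\<integral>y. exp (-\<alpha>*(s + (\<Sum>k\<in>insert i J. a k * (x(i:=y)) k))\<^sup>2) \<partial>std_normal)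
        = (\<integral>y. exp (-\<alpha>*((s + (\<Sum>k\<in>J. a k * x k)) + a i * y)\<^sup>2) \<partial>std_normal)"
      unfolding sm by (simp add: algebra_simps)
    also have "\<dots> = exp (-\<alpha>*(s + (\<Sum>k\<in>J. a k * x k))\<^sup>2/bb) / sqrt bb"
      unfolding bb_def by (rule int_exp_shift) (use insert.prems in auto)
    also have "\<dots> = exp (-(\<alpha>/bb)*(s + (\<Sum>k\<in>J. a k * x k))\<^sup>2) / sqrt bb"
      by simp
    finally show "(\<integral>y. exp (-\<alpha>*(s + (\<Sum>k\<in>insert i J. a k * (x(i:=y)) k))\<^sup>2) \<partial>std_normal)
        = exp (-(\<alpha>/bb)*(s + (\<Sum>k\<in>J. a k * x k))\<^sup>2) / sqrt bb" .
  qed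
  also have "\<dots> = (\<integral>x. exp (-(\<alpha>/bb)*(s + (\<Sum>k\<in>J. a k * x k))\<^sup>2) \<partial>PiM J (\<lambda>_. std_normal)) / sqrt bb"
    by simp
  also have "\<dots> = (exp (-(\<alpha>/bb)* s\<^sup>2/(1 + 2*(\<alpha>/bb)*?A)) / sqrt (1 + 2*(\<alpha>/bb)*?A)) / sqrt bb"
    using insert.IH[of "\<alpha>/bb" s] insert.prems b by simp
  also have "\<dots> = exp (-\<alpha>* s\<^sup>2/(1 + 2*\<alpha>*(\<Sum>k\<in>insert i J. (a k)\<^sup>2))) / sqrt (1 + 2*\<alpha>*(\<Sum>k\<in>insert i J. (a k)\<^sup>2))"
  proof -
    have e1: "1 + 2*(\<alpha>/bb)*?A = (1 + 2*\<alpha>*(\<Sum>k\<in>insert i J. (a k)\<^sup>2))/bb"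
      using b insert.hyps unfolding bb_def by (simp add: field_simps)
    have pos: "1 + 2*\<alpha>*(\<Sum>k\<in>insert i J. (a k)\<^sup>2) > 0"
      using insert.prems by (simp add: add_pos_nonneg sum_nonneg)
    have e2: "-(\<alpha>/bb)* s\<^sup>2/((1 + 2*\<alpha>*(\<Sum>k\<in>insert i J. (a k)\<^sup>2))/bb) = -\<alpha>* s\<^sup>2/(1 + 2*\<alpha>*(\<Sum>k\<in>insert i J. (a k)\<^sup>2))"
      using b pos by (simp add: divide_simps)
    have e3: "sqrt ((1 + 2*\<alpha>*(\<Sum>k\<in>insert i J. (a k)\<^sup>2))/bb) * sqrt bb = sqrt (1 + 2*\<alpha>*(\<Sum>k\<in>insert i J. (a k)\<^sup>2))"
      using b pos by (simp add: real_sqrt_divide)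
    show ?thesis unfolding e1 divide_divide_eq_left e2 e3 ..
  qed
  finally show ?case .
qed


lemma deriv_neg_std: "DERIV (\<lambda>t. - std_normal_density t) x :> x * std_normal_density x"
proof -
  have "DERIV (\<lambda>t. - exp (-t\<^sup>2/2)) x :> x * exp (-x\<^sup>2/2)"
    by (auto intro!: derivative_eq_intros simp: power2_eq_square)
  from DERIV_cmult[OF this, of "1/sqrt(2*pi)"] show ?thesis
    by (simp add: std_normal_density_def mult_ac)
qed

lemma cont_t_dens: "isCont (\<lambda>t. t * std_normal_density t) x"
  unfolding std_normal_density_def by (intro continuous_intros) auto

lemma std_dens_lim: "(\<lambda>n::nat. std_normal_density (c + real n)) \<longlonglongrightarrow> 0"
proof -
  have f1: "filterlim (\<lambda>n::nat. c + real n) at_top sequentially"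
    by (rule filterlim_tendsto_add_at_top[OF tendsto_const filterlim_real_sequentially])
  have f2: "filterlim (\<lambda>n::nat. (c + real n)^2) at_top sequentially"
    by (rule filterlim_pow_at_top[OF _ f1]) simp
  have f3: "filterlim (\<lambda>n::nat. (1/2) * (c + real n)^2) at_top sequentially"
    by (rule filterlim_tendsto_pos_mult_at_top[OF tendsto_const _ f2]) simp
  have f4: "filterlim (\<lambda>n::nat. - ((1/2) * (c + real n)^2)) at_bot sequentially"
    using f3 by (simp add: filterlim_uminus_at_top)
  have "(\<lambda>n::nat. exp (- ((1/2) * (c + real n)^2))) \<longlonglongrightarrow> 0"
    by (rule filterlim_compose[OF exp_at_bot f4])
  then have "(\<lambda>n::nat. (1 / sqrt (2 * pi)) * exp (- ((1/2) * (c + real n)^2))) \<longlonglongrightarrow> (1 / sqrt (2 * pi)) * 0"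
    by (rule tendsto_mult_left)
  then show ?thesis unfolding std_normal_density_def by simp
qed

lemma integrable_t_dens: "integrable lborel (\<lambda>t. std_normal_density t * t)"
  using integrable_std_normal_moment[of 1] by simp

lemma half_int:
  "(\<integral>t. std_normal_density t * t * indicator {c..} t \<partial>lborel) = std_normal_density c"
proof -
  let ?s = "\<lambda>(n::nat) t. std_normal_density t * t * indicator {c..c + real n} t"
  let ?f = "\<lambda>t. std_normal_density t * t * indicator {c..} t"
  have lim: "(\<lambda>n. integral\<^sup>L lborel (?s n)) \<longlonglongrightarrow> integral\<^sup>L lborel ?f"
  proof (rule integral_dominated_convergence[where w="\<lambda>t. norm (std_normal_density t * t)"])
    show "integrable lborel (\<lambda>t. norm (std_normal_density t * t))"
      using integrable_t_dens by (rule integrable_norm)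
    show "AE x in lborel. (\<lambda>i. ?s i x) \<longlonglongrightarrow> ?f x"
    proof (rule AE_I2)
      fix x
      show "(\<lambda>i. ?s i x) \<longlonglongrightarrow> ?f x"
      proof (cases "c \<le> x")
        case True
        obtain n0 :: nat where "x - c \<le> real n0" using real_arch_simple by blast
        then have "eventually (\<lambda>i. ?s i x = ?f x) sequentially"
          using True by (auto simp: eventually_sequentially indicator_def intro!: exI[of _ n0])
        then show ?thesis by (rule tendsto_eventually)
      next
        case False
        then show ?thesis by (simp add: indicator_def)
      qed
    qed
    show "\<And>i. AE x in lborel. norm (?s i x) \<le> norm (std_normal_density x * x)"
      by (auto simp: indicator_def)
  qed auto
  have eq: "integral\<^sup>L lborel (?s n) = std_normal_density c - std_normal_density (c + real n)" for n
  proof -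
    have "integral\<^sup>L lborel (?s n) = (\<integral>t. (t * std_normal_density t) * indicator {c..c + real n} t \<partial>lborel)"
      by (simp add: mult_ac)
    also have "\<dots> = (- std_normal_density (c + real n)) - (- std_normal_density c)"
      by (rule integral_FTC_Icc_real) (auto intro: deriv_neg_std cont_t_dens)
    finally show ?thesis by simp
  qed
  have "(\<lambda>n. integral\<^sup>L lborel (?s n)) \<longlonglongrightarrow> std_normal_density c"
    unfolding eq using tendsto_diff[OF tendsto_const std_dens_lim, of "std_normal_density c" c] by simp
  with lim show ?thesis using LIMSEQ_unique by blast
qed

lemma sgn_int:
  fixes a s :: real
  shows "(\<integral>t. sgn (a*t + s) * t \<partial>std_normal) = (if a = 0 then 0 else 2 * sgn a * std_normal_density (s/a))"
proof -
  have "(\<integral>t. sgn (a*t + s) * t \<partial>std_normal) = (\<integral>t. std_normal_density t * (sgn (a*t + s) * t) \<partial>lborel)"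
    by (rule std_normal_integral) simp
  also have "\<dots> = (if a = 0 then 0 else 2 * sgn a * std_normal_density (s/a))"
  proof (cases "a = 0")
    case True
    have "(\<integral>t. std_normal_density t * (sgn (a*t + s) * t) \<partial>lborel) = (\<integral>t. sgn s * (std_normal_density t * t) \<partial>lborel)"
      by (rule Bochner_Integration.integral_cong) (auto simp: True)
    also have "\<dots> = sgn s * (\<integral>t. std_normal_density t * t \<partial>lborel)"
      by (rule integral_mult_right_zero)
    also have "(\<integral>t. std_normal_density t * t \<partial>lborel) = 0"
      using integral_std_normal_moment_odd[of 0] by simp
    finally show ?thesis using True by simp
  next
    case False
    define c where "c = - s / a"
    have ae: "AE t in lborel. std_normal_density t * (sgn (a*t + s) * t)
       = sgn a * (2 * (std_normal_density t * t * indicator {c..} t) - std_normal_density t * t)"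
    proof -
      have "AE t in lborel. t \<noteq> c" by (rule AE_lborel_singleton)
      then show ?thesis
      proof (rule AE_mp, intro AE_I2 impI)
        fix t assume tc: "t \<noteq> c"
        have "sgn (a*t + s) = sgn a * (if c \<le> t then 1 else -1)"
        proof (cases "a > 0")
          case True
          then have "a*t + s > 0 \<longleftrightarrow> t > c" "a*t + s < 0 \<longleftrightarrow> t < c"
            unfolding c_def by (auto simp: field_simps)
          then show ?thesis using True tc by (auto simp: sgn_if)
        next
          case f2: False
          then have an: "a < 0" using False by simp
          then have "a*t + s > 0 \<longleftrightarrow> t < c" "a*t + s < 0 \<longleftrightarrow> t > c"
            unfolding c_def by (auto simp: field_simps)
          then show ?thesis using an tc by (auto simp: sgn_if)
        qed
        then show "std_normal_density t * (sgn (a*t + s) * t)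
          = sgn a * (2 * (std_normal_density t * t * indicator {c..} t) - std_normal_density t * t)"
          by (auto simp: indicator_def algebra_simps)
      qed
    qed
    have int1: "integrable lborel (\<lambda>t. std_normal_density t * t * indicator {c..} t)"
      by (rule Bochner_Integration.integrable_bound[OF integrable_t_dens]) (auto simp: indicator_def)
    have "(\<integral>t. std_normal_density t * (sgn (a*t + s) * t) \<partial>lborel)
        = (\<integral>t. sgn a * (2 * (std_normal_density t * t * indicator {c..} t) - std_normal_density t * t) \<partial>lborel)"
      by (rule integral_cong_AE) (use ae in auto)
    also have "\<dots> = sgn a * (2 * std_normal_density c - 0)"
      using int1 integrable_t_dens integral_std_normal_moment_odd[of 0]
      by (simp add: half_int)
    also have "std_normal_density c = std_normal_density (s/a)"
      unfolding c_def std_normal_density_def by (simp add: power2_eq_square)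
    finally show ?thesis using False by simp
  qed
  finally show ?thesis .
qed


lemma meas_id_std[measurable]: "(\<lambda>x::real. x) \<in> borel_measurable std_normal"
  by (subst measurable_cong_sets[OF sets_std_normal refl]) simp

lemma integrable_std_id: "integrable std_normal (\<lambda>x. x)"
proof -
  have "integrable lborel (\<lambda>x. std_normal_density x *\<^sub>R x)"
    using integrable_t_dens by simp
  then show ?thesis unfolding std_normal_def
    by (subst integrable_density) auto
qed

lemma integrable_comp_PiM:
  assumes "j \<in> I"
  shows "integrable (PiM I (\<lambda>_. std_normal)) (\<lambda>\<omega>. \<omega> j)"
proof -
  have d: "distr (PiM I (\<lambda>_. std_normal)) std_normal (\<lambda>\<omega>. \<omega> j) = std_normal"
    by (rule distr_PiM_component) (use assms prob_std_normal in auto)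
  have "integrable (distr (PiM I (\<lambda>_. std_normal)) std_normal (\<lambda>\<omega>. \<omega> j)) (\<lambda>x. x)"
    unfolding d by (rule integrable_std_id)
  then show ?thesis
    by (subst (asm) integrable_distr_eq) (use assms in auto)
qed

lemma integrable_bounded_times_comp:
  fixes f :: "('i \<Rightarrow> real) \<Rightarrow> real"
  assumes "j \<in> I" "f \<in> borel_measurable (PiM I (\<lambda>_. std_normal))" "\<And>x. \<bar>f x\<bar> \<le> B"
  shows "integrable (PiM I (\<lambda>_. std_normal)) (\<lambda>\<omega>. f \<omega> * \<omega> j)"
proof (rule Bochner_Integration.integrable_bound[where f="\<lambda>\<omega>. B * \<omega> j"])
  show "integrable (PiM I (\<lambda>_. std_normal)) (\<lambda>\<omega>. B * \<omega> j)"
    using integrable_comp_PiM[OF assms(1)] by simp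
  show "(\<lambda>\<omega>. f \<omega> * \<omega> j) \<in> borel_measurable (PiM I (\<lambda>_. std_normal))"
    using assms(1,2) by measurable
  show "AE x in PiM I (\<lambda>_. std_normal). norm (f x * x j) \<le> norm (B * x j)"
  proof (rule AE_I2)
    fix x
    have "\<bar>f x\<bar> * \<bar>x j\<bar> \<le> \<bar>B\<bar> * \<bar>x j\<bar>"
      using assms(3)[of x] by (intro mult_right_mono) auto
    then show "norm (f x * x j) \<le> norm (B * x j)" by (simp add: abs_mult)
  qed
qed

lemma sgn_lin_comp:
  fixes a :: "'i \<Rightarrow> real"
  assumes fin: "finite I" and jI: "j \<in> I"
  shows "(\<integral>\<omega>. sgn (\<Sum>i\<in>I. a i * \<omega> i) * \<omega> j \<partial>PiM I (\<lambda>_. std_normal))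
     = sqrt (2/pi) * a j / sqrt (\<Sum>i\<in>I. (a i)\<^sup>2)"
proof -
  define J where "J = I - {j}"
  have IJ: "I = insert j J" and jJ: "j \<notin> J" and fJ: "finite J"
    using jI fin unfolding J_def by auto
  let ?S = "\<lambda>x. \<Sum>k\<in>J. a k * x k"
  let ?A = "\<Sum>k\<in>J. (a k)\<^sup>2"
  have int: "integrable (PiM (insert j J) (\<lambda>_. std_normal)) (\<lambda>\<omega>. sgn (\<Sum>i\<in>insert j J. a i * \<omega> i) * \<omega> j)"
    by (rule integrable_bounded_times_comp[where B=1]) (auto simp: sgn_if)
  have "(\<integral>\<omega>. sgn (\<Sum>i\<in>I. a i * \<omega> i) * \<omega> j \<partial>PiM I (\<lambda>_. std_normal))
      = (\<integral>x. (\<integral>y. sgn (\<Sum>i\<in>insert j J. a i * (x(j:=y)) i) * (x(j:=y)) j \<partial>std_normal) \<partial>PiM J (\<lambda>_. std_normal))"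
    unfolding IJ by (rule SN.product_integral_insert[OF fJ jJ int])
  also have "\<dots> = (\<integral>x. (if a j = 0 then 0 else 2 * sgn (a j) * std_normal_density (?S x / a j)) \<partial>PiM J (\<lambda>_. std_normal))"
  proof (rule Bochner_Integration.integral_cong[OF refl])
    fix x assume "x \<in> space (PiM J (\<lambda>_. std_normal))"
    have sm: "(\<Sum>i\<in>insert j J. a i * (x(j:=y)) i) = a j * y + ?S x" for y
    proof -
      have "(\<Sum>k\<in>J. a k * (x(j:=y)) k) = ?S x"
        using jJ by (intro sum.cong) auto
      then show ?thesis using jJ fJ by simp
    qed
    show "(\<integral>y. sgn (\<Sum>i\<in>insert j J. a i * (x(j:=y)) i) * (x(j:=y)) j \<partial>std_normal)
        = (if a j = 0 then 0 else 2 * sgn (a j) * std_normal_density (?S x / a j))"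
      unfolding sm by (simp add: sgn_int)
  qed
  also have "\<dots> = sqrt (2/pi) * a j / sqrt (\<Sum>i\<in>I. (a i)\<^sup>2)"
  proof (cases "a j = 0")
    case True
    then show ?thesis by simp
  next
    case False
    have sq: "(a j)\<^sup>2 > 0" using False by simp
    have "(\<integral>x. (if a j = 0 then 0 else 2 * sgn (a j) * std_normal_density (?S x / a j)) \<partial>PiM J (\<lambda>_. std_normal))
        = (\<integral>x. (2 * sgn (a j) / sqrt (2*pi)) * exp (-(1/(2*(a j)\<^sup>2))*(0 + ?S x)\<^sup>2) \<partial>PiM J (\<lambda>_. std_normal))"
      using False by (intro Bochner_Integration.integral_cong)
        (auto simp: std_normal_density_def power_divide)
    also have "\<dots> = (2 * sgn (a j) / sqrt (2*pi)) * (\<integral>x. exp (-(1/(2*(a j)\<^sup>2))*(0 + ?S x)\<^sup>2) \<partial>PiM J (\<lambda>_. std_normal))"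
      by (rule integral_mult_right_zero)
    also have "(\<integral>x. exp (-(1/(2*(a j)\<^sup>2))*(0 + ?S x)\<^sup>2) \<partial>PiM J (\<lambda>_. std_normal))
        = exp (-(1/(2*(a j)\<^sup>2))*0\<^sup>2/(1 + 2*(1/(2*(a j)\<^sup>2))*?A)) / sqrt (1 + 2*(1/(2*(a j)\<^sup>2))*?A)"
      by (rule exp_sum_PiM[OF fJ]) (use sq in simp)
    also have "\<dots> = \<bar>a j\<bar> / sqrt ((a j)\<^sup>2 + ?A)"
    proof -
      have "1 + 2*(1/(2*(a j)\<^sup>2))*?A = ((a j)\<^sup>2 + ?A) / (a j)\<^sup>2"
        using sq by (simp add: field_simps)
      then have "sqrt (1 + 2*(1/(2*(a j)\<^sup>2))*?A) = sqrt ((a j)\<^sup>2 + ?A) / \<bar>a j\<bar>"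
        by (simp add: real_sqrt_divide)
      then show ?thesis by simp
    qed
    also have "(\<Sum>i\<in>I. (a i)\<^sup>2) = (a j)\<^sup>2 + ?A"
      unfolding IJ using fJ jJ by simp
    moreover have "2 * sgn (a j) / sqrt (2*pi) * (\<bar>a j\<bar> / sqrt ((a j)\<^sup>2 + ?A)) = sqrt (2/pi) * a j / sqrt ((a j)\<^sup>2 + ?A)"
    proof -
      have "sgn (a j) * \<bar>a j\<bar> = a j" by (simp add: sgn_mult_abs)
      moreover have "2 / sqrt (2*pi) = sqrt (2/pi)"
      proof -
        have "sqrt (2/pi) * sqrt (2*pi) = 2"
          by (simp add: real_sqrt_mult[symmetric])
        then show ?thesis by (simp add: field_simps)
      qed
      moreover have "sqrt ((a j)\<^sup>2 + ?A) > 0" using sq by (simp add: add_pos_nonneg sum_nonneg)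
      moreover have "2 * sgn (a j) / sqrt (2*pi) * (\<bar>a j\<bar> / sqrt ((a j)\<^sup>2 + ?A))
          = (2 / sqrt (2*pi)) * (sgn (a j) * \<bar>a j\<bar>) / sqrt ((a j)\<^sup>2 + ?A)"
        by simp
      ultimately show ?thesis by simp
    qed
    ultimately show ?thesis by simp
  qed
  finally show ?thesis .
qed


lemma sgn_lin_lin:
  fixes a b :: "'i \<Rightarrow> real"
  assumes fin: "finite I"
  shows "(\<integral>\<omega>. sgn (\<Sum>i\<in>I. a i * \<omega> i) * (\<Sum>i\<in>I. b i * \<omega> i) \<partial>PiM I (\<lambda>_. std_normal))
     = sqrt (2/pi) * (\<Sum>i\<in>I. a i * b i) / sqrt (\<Sum>i\<in>I. (a i)\<^sup>2)"
proof -
  have int: "integrable (PiM I (\<lambda>_. std_normal)) (\<lambda>\<omega>. b j * (sgn (\<Sum>i\<in>I. a i * \<omega> i) * \<omega> j))" if "j \<in> I" for j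
    using integrable_bounded_times_comp[OF that, of "\<lambda>\<omega>. sgn (\<Sum>i\<in>I. a i * \<omega> i)" 1]
    by (auto simp: sgn_if)
  have "(\<integral>\<omega>. sgn (\<Sum>i\<in>I. a i * \<omega> i) * (\<Sum>i\<in>I. b i * \<omega> i) \<partial>PiM I (\<lambda>_. std_normal))
      = (\<integral>\<omega>. (\<Sum>j\<in>I. b j * (sgn (\<Sum>i\<in>I. a i * \<omega> i) * \<omega> j)) \<partial>PiM I (\<lambda>_. std_normal))"
    by (rule Bochner_Integration.integral_cong[OF refl], subst sum_distrib_left) (simp add: mult_ac)
  also have "\<dots> = (\<Sum>j\<in>I. (\<integral>\<omega>. b j * (sgn (\<Sum>i\<in>I. a i * \<omega> i) * \<omega> j) \<partial>PiM I (\<lambda>_. std_normal)))"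
    by (rule Bochner_Integration.integral_sum) (use int in auto)
  also have "\<dots> = (\<Sum>j\<in>I. b j * (sqrt (2/pi) * a j / sqrt (\<Sum>i\<in>I. (a i)\<^sup>2)))"
    by (intro sum.cong refl) (simp add: sgn_lin_comp[OF fin])
  also have "\<dots> = sqrt (2/pi) * (\<Sum>i\<in>I. a i * b i) / sqrt (\<Sum>i\<in>I. (a i)\<^sup>2)"
    by (simp add: sum_distrib_left sum_divide_distrib mult_ac)
  finally show ?thesis .
qed

definition I0 :: "nat \<Rightarrow> nat \<Rightarrow> (nat \<times> nat \<times> bool) set" where
  "I0 N Q = {..N} \<times> {..<Q} \<times> UNIV"

lemma Omega_I0: "Omega N Q = PiM (I0 N Q) (\<lambda>_. std_normal)"
  unfolding Omega_def I0_def ..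

lemma finite_I0[simp]: "finite (I0 N Q)"
  unfolding I0_def by simp

lemma sum_prod_split:
  "finite A \<Longrightarrow> finite B \<Longrightarrow> (\<Sum>i\<in>A\<times>B. g i) = (\<Sum>x\<in>A. \<Sum>y\<in>B. g (x,y))"
  by (subst sum.cartesian_product) simp

lemma sum_I0:
  fixes g :: "nat \<times> nat \<times> bool \<Rightarrow> 'a::comm_monoid_add"
  shows "(\<Sum>i\<in>I0 N Q. g i) = (\<Sum>n\<le>N. \<Sum>q<Q. g (n,q,True) + g (n,q,False))"
proof -
  have "(\<Sum>i\<in>I0 N Q. g i) = (\<Sum>n\<le>N. \<Sum>r\<in>{..<Q} \<times> UNIV. g (n, r))"
    unfolding I0_def by (rule sum_prod_split) auto
  also have "\<dots> = (\<Sum>n\<le>N. \<Sum>q<Q. \<Sum>b\<in>UNIV. g (n, q, b))"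
    by (intro sum.cong refl) (rule sum_prod_split, auto)
  also have "\<dots> = (\<Sum>n\<le>N. \<Sum>q<Q. g (n,q,True) + g (n,q,False))"
    by (simp add: UNIV_bool add.commute)
  finally show ?thesis .
qed

definition Zc :: "(nat \<times> nat \<times> bool \<Rightarrow> real) \<Rightarrow> nat \<Rightarrow> nat \<Rightarrow> complex" where
  "Zc \<omega> n q = Complex (\<omega> (n,q,True)) (\<omega> (n,q,False))"

definition lin :: "nat \<Rightarrow> nat \<Rightarrow> (nat \<Rightarrow> nat \<Rightarrow> complex) \<Rightarrow> (nat \<times> nat \<times> bool \<Rightarrow> real) \<Rightarrow> complex" where
  "lin N Q c \<omega> = (\<Sum>n\<le>N. \<Sum>q<Q. c n q * Zc \<omega> n q)"

definition ar :: "(nat \<Rightarrow> nat \<Rightarrow> complex) \<Rightarrow> nat \<times> nat \<times> bool \<Rightarrow> real" where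
  "ar c = (\<lambda>(n,q,b). if b then Re (c n q) else - Im (c n q))"

definition ai :: "(nat \<Rightarrow> nat \<Rightarrow> complex) \<Rightarrow> nat \<times> nat \<times> bool \<Rightarrow> real" where
  "ai c = (\<lambda>(n,q,b). if b then Im (c n q) else Re (c n q))"

lemma Re_lin: "Re (lin N Q c \<omega>) = (\<Sum>i\<in>I0 N Q. ar c i * \<omega> i)"
  unfolding sum_I0 lin_def ar_def Zc_def by (simp add: algebra_simps)

lemma Im_lin: "Im (lin N Q c \<omega>) = (\<Sum>i\<in>I0 N Q. ai c i * \<omega> i)"
  unfolding sum_I0 lin_def ai_def Zc_def by (simp add: algebra_simps)

lemma ar_sq: "(\<Sum>i\<in>I0 N Q. (ar c i)\<^sup>2) = (\<Sum>n\<le>N. \<Sum>q<Q. (cmod (c n q))\<^sup>2)"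
  unfolding sum_I0 ar_def by (simp add: cmod_power2)

lemma ai_sq: "(\<Sum>i\<in>I0 N Q. (ai c i)\<^sup>2) = (\<Sum>n\<le>N. \<Sum>q<Q. (cmod (c n q))\<^sup>2)"
  unfolding sum_I0 ai_def by (simp add: cmod_power2 add.commute)

lemma arar: "(\<Sum>i\<in>I0 N Q. ar c i * ar d i) = Re (\<Sum>n\<le>N. \<Sum>q<Q. c n q * cnj (d n q))"
  unfolding sum_I0 ar_def by simp

lemma aiai: "(\<Sum>i\<in>I0 N Q. ai c i * ai d i) = Re (\<Sum>n\<le>N. \<Sum>q<Q. c n q * cnj (d n q))"
  unfolding sum_I0 ai_def by (simp add: add.commute)

lemma aiar: "(\<Sum>i\<in>I0 N Q. ai c i * ar d i) - (\<Sum>i\<in>I0 N Q. ar c i * ai d i) = 2 * Im (\<Sum>n\<le>N. \<Sum>q<Q. c n q * cnj (d n q))"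
  unfolding sum_I0 ai_def ar_def by (simp add: sum_subtractf[symmetric] sum_distrib_left algebra_simps)


lemma integrable_sgn_lin:
  fixes a b :: "'i \<Rightarrow> real"
  assumes fin: "finite I"
  shows "integrable (PiM I (\<lambda>_. std_normal)) (\<lambda>\<omega>. sgn (\<Sum>i\<in>I. a i * \<omega> i) * (\<Sum>i\<in>I. b i * \<omega> i))"
proof -
  have int: "integrable (PiM I (\<lambda>_. std_normal)) (\<lambda>\<omega>. b j * (sgn (\<Sum>i\<in>I. a i * \<omega> i) * \<omega> j))" if "j \<in> I" for j
    using integrable_bounded_times_comp[OF that, of "\<lambda>\<omega>. sgn (\<Sum>i\<in>I. a i * \<omega> i)" 1]
    by (auto simp: sgn_if)
  have "integrable (PiM I (\<lambda>_. std_normal)) (\<lambda>\<omega>. \<Sum>j\<in>I. b j * (sgn (\<Sum>i\<in>I. a i * \<omega> i) * \<omega> j))"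
    using int by auto
  moreover have "(\<lambda>\<omega>. sgn (\<Sum>i\<in>I. a i * \<omega> i) * (\<Sum>i\<in>I. b i * \<omega> i)) = (\<lambda>\<omega>. \<Sum>j\<in>I. b j * (sgn (\<Sum>i\<in>I. a i * \<omega> i) * \<omega> j))"
    by (rule ext, subst sum_distrib_left) (simp add: mult_ac)
  ultimately show ?thesis by simp
qed

lemma csgn_lin:
  fixes c d :: "nat \<Rightarrow> nat \<Rightarrow> complex" and N Q :: nat
  defines "S \<equiv> (\<Sum>n\<le>N. \<Sum>q<Q. (cmod (c n q))\<^sup>2)"
  defines "P \<equiv> (\<Sum>n\<le>N. \<Sum>q<Q. c n q * cnj (d n q))"
  shows "(\<integral>\<omega>. csgn (lin N Q c \<omega>) * cnj (lin N Q d \<omega>) \<partial>Omega N Q)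
    = complex_of_real (2 / (sqrt pi * sqrt S)) * P"
proof -
  let ?M = "PiM (I0 N Q) (\<lambda>_. std_normal)"
  let ?YR = "\<lambda>\<omega>. \<Sum>i\<in>I0 N Q. ar c i * \<omega> i"
  let ?YI = "\<lambda>\<omega>. \<Sum>i\<in>I0 N Q. ai c i * \<omega> i"
  let ?XR = "\<lambda>\<omega>. \<Sum>i\<in>I0 N Q. ar d i * \<omega> i"
  let ?XI = "\<lambda>\<omega>. \<Sum>i\<in>I0 N Q. ai d i * \<omega> i"
  define A1 where "A1 = (\<lambda>\<omega>. sgn (?YR \<omega>) * ?XR \<omega> + sgn (?YI \<omega>) * ?XI \<omega>)"
  define A2 where "A2 = (\<lambda>\<omega>. sgn (?YI \<omega>) * ?XR \<omega> - sgn (?YR \<omega>) * ?XI \<omega>)"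
  have pw: "csgn (lin N Q c \<omega>) * cnj (lin N Q d \<omega>)
      = complex_of_real (A1 \<omega> / sqrt 2) + \<i> * complex_of_real (A2 \<omega> / sqrt 2)" for \<omega>
    unfolding A1_def A2_def csgn_def
    by (simp add: complex_eq_iff Re_lin[symmetric] Im_lin[symmetric] Re_divide Im_divide
        power2_eq_square add_divide_distrib diff_divide_distrib ring_distribs)
  have i1: "integrable ?M (\<lambda>\<omega>. sgn (?YR \<omega>) * ?XR \<omega>)" "integrable ?M (\<lambda>\<omega>. sgn (?YI \<omega>) * ?XI \<omega>)"
     "integrable ?M (\<lambda>\<omega>. sgn (?YI \<omega>) * ?XR \<omega>)" "integrable ?M (\<lambda>\<omega>. sgn (?YR \<omega>) * ?XI \<omega>)"
    by (rule integrable_sgn_lin, simp)+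
  have iA1: "integrable ?M A1" unfolding A1_def using i1 by auto
  have iA2: "integrable ?M A2" unfolding A2_def using i1 by auto
  have sR: "(\<Sum>i\<in>I0 N Q. (ar c i)\<^sup>2) = S" unfolding S_def by (rule ar_sq)
  have sI: "(\<Sum>i\<in>I0 N Q. (ai c i)\<^sup>2) = S" unfolding S_def by (rule ai_sq)
  have IA1: "integral\<^sup>L ?M A1 = sqrt (2/pi) * (2 * Re P) / sqrt S"
  proof -
    have "integral\<^sup>L ?M A1 = (\<integral>\<omega>. sgn (?YR \<omega>) * ?XR \<omega> \<partial>?M) + (\<integral>\<omega>. sgn (?YI \<omega>) * ?XI \<omega> \<partial>?M)"
      unfolding A1_def using i1 by simp
    also have "\<dots> = sqrt (2/pi) * Re P / sqrt S + sqrt (2/pi) * Re P / sqrt S"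
      by (simp only: sgn_lin_lin[OF finite_I0] sR sI arar aiai P_def)
    finally show ?thesis by simp
  qed
  have IA2: "integral\<^sup>L ?M A2 = sqrt (2/pi) * (2 * Im P) / sqrt S"
  proof -
    have "integral\<^sup>L ?M A2 = (\<integral>\<omega>. sgn (?YI \<omega>) * ?XR \<omega> \<partial>?M) - (\<integral>\<omega>. sgn (?YR \<omega>) * ?XI \<omega> \<partial>?M)"
      unfolding A2_def using i1 by simp
    also have "\<dots> = sqrt (2/pi) * (\<Sum>i\<in>I0 N Q. ai c i * ar d i) / sqrt S - sqrt (2/pi) * (\<Sum>i\<in>I0 N Q. ar c i * ai d i) / sqrt S"
      by (simp only: sgn_lin_lin[OF finite_I0] sR sI)
    also have "\<dots> = sqrt (2/pi) * ((\<Sum>i\<in>I0 N Q. ai c i * ar d i) - (\<Sum>i\<in>I0 N Q. ar c i * ai d i)) / sqrt S"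
      by (simp add: diff_divide_distrib right_diff_distrib)
    also have "\<dots> = sqrt (2/pi) * (2 * Im P) / sqrt S"
      unfolding P_def aiar ..
    finally show ?thesis .
  qed
  have "(\<integral>\<omega>. csgn (lin N Q c \<omega>) * cnj (lin N Q d \<omega>) \<partial>Omega N Q)
      = (\<integral>\<omega>. complex_of_real (A1 \<omega> / sqrt 2) + \<i> * complex_of_real (A2 \<omega> / sqrt 2) \<partial>?M)"
    unfolding Omega_I0 pw ..
  also have "\<dots> = complex_of_real (integral\<^sup>L ?M A1 / sqrt 2) + \<i> * complex_of_real (integral\<^sup>L ?M A2 / sqrt 2)"
    using iA1 iA2 by simp
  also have "\<dots> = complex_of_real (2 / (sqrt pi * sqrt S)) * P"
  proof -
    have k: "sqrt (2/pi) * 2 / sqrt 2 = 2 / sqrt pi"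
      by (simp add: real_sqrt_divide field_simps)
    have k1: "sqrt (2/pi) * (2 * x) / sqrt S / sqrt 2 = 2 / (sqrt pi * sqrt S) * x" for x
    proof -
      have "sqrt (2/pi) * (2 * x) / sqrt S / sqrt 2 = (sqrt (2/pi) * 2 / sqrt 2) * x / sqrt S"
        by (simp add: field_simps)
      then show ?thesis unfolding k by simp
    qed
    show ?thesis unfolding IA1 IA2 k1
      by (simp add: complex_eq_iff)
  qed
  finally show ?thesis .
qed


lemma dft_sq: "Q > 0 \<Longrightarrow> (cmod (dft Q p q))\<^sup>2 = 1 / real Q"
  unfolding dft_def by (simp add: norm_divide power_divide)

lemma dft_adj_sq: "Q > 0 \<Longrightarrow> (cmod (dft_adj Q p q))\<^sup>2 = 1 / real Q"
  unfolding dft_adj_def by (simp add: dft_sq)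

lemma cis_ne_1:
  fixes p q Q :: nat
  assumes "p < Q" "q < Q" "p \<noteq> q"
  shows "cis (2 * pi * (real q - real p) / real Q) \<noteq> 1"
proof
  assume c: "cis (2 * pi * (real q - real p) / real Q) = 1"
  then have "cos (2 * pi * (real q - real p) / real Q) = 1"
    using c by (simp add: complex_eq_iff)
  then obtain m :: int where m: "2 * pi * (real q - real p) / real Q = real_of_int m * 2 * pi"
    using cos_one_2pi_int by blast
  have Q0: "real Q > 0" using assms by simp
  from m have "2 * pi * (real q - real p) = (real_of_int m * 2 * pi) * real Q"
    using Q0 by (simp add: divide_eq_eq)
  then have "2 * pi * (real q - real p) = 2 * pi * (real_of_int m * real Q)" by (simp add: mult_ac)
  then have "real q - real p = m * real Q" using pi_gt_zero by (simp only: mult_left_cancel)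
  then have "real_of_int (int q - int p) = real_of_int (m * int Q)" by simp
  then have e: "int q - int p = m * int Q" by (simp only: of_int_eq_iff)
  have "m \<noteq> 0" using e assms by auto
  then have "\<bar>m\<bar> \<ge> 1" by simp
  then have "\<bar>m * int Q\<bar> \<ge> int Q" using mult_right_mono[of 1 "\<bar>m\<bar>" "int Q"] by (simp add: abs_mult)
  moreover have "\<bar>int q - int p\<bar> < int Q" using assms by auto
  ultimately show False using e by simp
qed

lemma dft_orth:
  assumes Q: "Q > 0" and p: "p < Q" and q: "q < Q"
  shows "(\<Sum>k<Q. dft Q p k * dft_adj Q k q) = (if p = q then 1 else 0)"
proof -
  define z where "z = cis (2 * pi * (real q - real p) / real Q)"
  have tm: "dft Q p k * dft_adj Q k q = z ^ k / of_real (real Q)" for k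
  proof -
    have "dft Q p k * dft_adj Q k q
        = cis (- 2 * pi * real p * real k / real Q) * cis (2 * pi * real q * real k / real Q) / (of_real (sqrt (real Q)) * of_real (sqrt (real Q)))"
      unfolding dft_adj_def dft_def by (simp add: cis_cnj)
    also have "\<dots> = cis (real k * (2 * pi * (real q - real p) / real Q)) / of_real (real Q)"
    proof -
      have "cis (- 2 * pi * real p * real k / real Q) * cis (2 * pi * real q * real k / real Q)
          = cis (real k * (2 * pi * (real q - real p) / real Q))"
        unfolding cis_mult by (rule arg_cong[where f=cis]) (simp add: divide_inverse algebra_simps)
      moreover have "of_real (sqrt (real Q)) * of_real (sqrt (real Q)) = (of_real (real Q) :: complex)"
        by (simp flip: of_real_mult)
      ultimately show ?thesis by simp
    qed
    also have "\<dots> = z ^ k / of_real (real Q)" unfolding z_def by (simp only: Complex.DeMoivre)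
    finally show ?thesis .
  qed
  have "(\<Sum>k<Q. dft Q p k * dft_adj Q k q) = (\<Sum>k<Q. z ^ k) / of_real (real Q)"
    unfolding tm by (simp add: sum_divide_distrib)
  also have "\<dots> = (if p = q then 1 else 0)"
  proof (cases "p = q")
    case True
    then have "z = 1" unfolding z_def by simp
    then show ?thesis using True Q by simp
  next
    case False
    have "z \<noteq> 1" unfolding z_def by (rule cis_ne_1[OF p q False])
    moreover have "z ^ Q = 1"
    proof -
      have "real Q * (2 * pi * (real q - real p) / real Q) = 2 * pi * (real q - real p)"
        using Q by simp
      then have "z ^ Q = cis (2 * pi * (real q - real p))"
        unfolding z_def Complex.DeMoivre by simp
      also have "\<dots> = cis (2 * pi * real_of_int (int q - int p))" by simp
      also have "\<dots> = 1" by (rule cis_multiple_2pi) simp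
      finally show ?thesis .
    qed
    ultimately show ?thesis using False by (simp add: sum_gp_strict)
  qed
  finally show ?thesis .
qed

lemma sum_stack:
  fixes f :: "nat \<Rightarrow> 'a::comm_monoid_add"
  shows "(\<Sum>a<N*Q. f a) = (\<Sum>n<N. \<Sum>p<Q. f (n*Q + p))"
proof -
  have "(\<Sum>a<N*Q. f a) = (\<Sum>n<N. sum f {n*Q..<n*Q+Q})"
    by (rule sum.nat_group[symmetric])
  also have "\<dots> = (\<Sum>n<N. \<Sum>p<Q. f (n*Q + p))"
  proof (rule sum.cong[OF refl])
    fix n assume "n \<in> {..<N}"
    show "sum f {n*Q..<n*Q+Q} = (\<Sum>p<Q. f (n*Q + p))"
    proof -
      have "sum f {0 + n*Q..<Q + n*Q} = (\<Sum>p=0..<Q. f (p + n*Q))" by (rule sum.shift_bounds_nat_ivl)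
      then show ?thesis by (simp add: add.commute lessThan_atLeast0)
    qed
  qed
  finally show ?thesis .
qed


definition sf :: "nat \<Rightarrow> (nat \<Rightarrow> nat \<Rightarrow> complex) \<Rightarrow> (nat \<Rightarrow> complex) \<Rightarrow> (nat \<Rightarrow> complex) \<Rightarrow> complex" where
  "sf K M v w = (\<Sum>a<K. \<Sum>b<K. cnj (v a) * M a b * w b)"

definition ip :: "nat \<Rightarrow> (nat \<Rightarrow> complex) \<Rightarrow> (nat \<Rightarrow> complex) \<Rightarrow> complex" where
  "ip K v u = (\<Sum>a<K. cnj (v a) * u a)"

definition mv :: "nat \<Rightarrow> (nat \<Rightarrow> nat \<Rightarrow> complex) \<Rightarrow> (nat \<Rightarrow> complex) \<Rightarrow> nat \<Rightarrow> complex" where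
  "mv K M v = (\<lambda>a. \<Sum>b<K. M a b * v b)"

definition nrm2 :: "nat \<Rightarrow> (nat \<Rightarrow> complex) \<Rightarrow> real" where
  "nrm2 K v = (\<Sum>a<K. (cmod (v a))\<^sup>2)"

lemma sf_mv: "sf K M v w = ip K v (mv K M w)"
  unfolding sf_def ip_def mv_def by (simp add: sum_distrib_left mult.assoc)

lemma sf_expand:
  "sf K M (\<lambda>a. v a + c * w a) (\<lambda>a. v a + c * w a)
    = sf K M v v + c * sf K M v w + cnj c * sf K M w v + (cnj c * c) * sf K M w w"
  unfolding sf_def by (simp add: algebra_simps sum.distrib sum_distrib_left)

lemma herm_of_real:
  assumes real: "\<And>v. Im (sf K M v v) = 0"
  shows "sf K M w v = cnj (sf K M v w)"
proof -
  have e1: "Im (sf K M v w + sf K M w v) = 0"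
    using real[of "\<lambda>a. v a + 1 * w a"] real[of v] real[of w] unfolding sf_expand by simp
  have e2: "Re (sf K M v w - sf K M w v) = 0"
    using real[of "\<lambda>a. v a + \<i> * w a"] real[of v] real[of w] unfolding sf_expand by simp
  show ?thesis using e1 e2 by (simp add: complex_eq_iff)
qed

lemma cs_form:
  assumes real: "\<And>v. Im (sf K M v v) = 0" and pos: "\<And>v. Re (sf K M v v) \<ge> 0"
  shows "(cmod (sf K M v w))\<^sup>2 \<le> Re (sf K M v v) * Re (sf K M w w)"
proof -
  define x where "x = sf K M w v"
  have hx: "sf K M v w = cnj x" unfolding x_def using herm_of_real[OF real, of v w] by simp
  have key: "0 \<le> Re (sf K M v v) - 2 * t * (cmod x)\<^sup>2 + t\<^sup>2 * (cmod x)\<^sup>2 * Re (sf K M w w)" for t :: real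
  proof -
    have "0 \<le> Re (sf K M (\<lambda>a. v a + (- of_real t * x) * w a) (\<lambda>a. v a + (- of_real t * x) * w a))"
      by (rule pos)
    also have "\<dots> = Re (sf K M v v) - 2 * t * (cmod x)\<^sup>2 + t\<^sup>2 * (cmod x)\<^sup>2 * Re (sf K M w w)"
    proof -
      have "cnj x * x = complex_of_real ((cmod x)\<^sup>2)" using complex_norm_square[of x] by (simp add: mult.commute)
      moreover have "x * cnj x = complex_of_real ((cmod x)\<^sup>2)" using complex_norm_square[of x] by simp
      moreover have "Re (complex_of_real r * z) = r * Re z" for r z by simp
      moreover have hc: "cmod x * cmod x = Re x * Re x + Im x * Im x"
        using cmod_power2[of x] by (simp add: power2_eq_square)
      ultimately show ?thesis unfolding sf_expand hx x_def[symmetric]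
        by (simp add: power2_eq_square algebra_simps hc)
    qed
    finally show ?thesis .
  qed
  show ?thesis
  proof (cases "Re (sf K M w w) = 0")
    case True
    have "(cmod x)\<^sup>2 = 0"
    proof (rule ccontr)
      assume ne: "(cmod x)\<^sup>2 \<noteq> 0"
      then have p: "(cmod x)\<^sup>2 > 0" by simp
      have "0 \<le> Re (sf K M v v) - 2 * ((Re (sf K M v v) + 1) / (2 * (cmod x)\<^sup>2)) * (cmod x)\<^sup>2"
        using key[of "(Re (sf K M v v) + 1) / (2 * (cmod x)\<^sup>2)"] True by simp
      also have "\<dots> = -1" using p by (simp add: field_simps)
      finally show False by simp
    qed
    then show ?thesis using hx pos[of v] pos[of w] by simp
  next
    case False
    then have qw: "Re (sf K M w w) > 0" using pos[of w] by simp
    have "0 \<le> Re (sf K M v v) - 2 * (1 / Re (sf K M w w)) * (cmod x)\<^sup>2 + (1 / Re (sf K M w w))\<^sup>2 * (cmod x)\<^sup>2 * Re (sf K M w w)"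
      by (rule key)
    also have "\<dots> = Re (sf K M v v) - (cmod x)\<^sup>2 / Re (sf K M w w)"
      using qw by (simp add: field_simps power2_eq_square)
    finally have "(cmod x)\<^sup>2 / Re (sf K M w w) \<le> Re (sf K M v v)" by simp
    then have "(cmod x)\<^sup>2 \<le> Re (sf K M v v) * Re (sf K M w w)"
      using qw by (simp add: divide_le_eq)
    then show ?thesis using hx by simp
  qed
qed


lemma nrm2_nonneg: "nrm2 K v \<ge> 0"
  unfolding nrm2_def by (simp add: sum_nonneg)

lemma cmod_le_nrm:
  assumes "a < K" shows "cmod (v a) \<le> sqrt (nrm2 K v)"
proof -
  have "(cmod (v a))\<^sup>2 \<le> nrm2 K v"
    unfolding nrm2_def using assms by (intro member_le_sum) auto
  then show ?thesis by (metis norm_ge_zero real_le_rsqrt)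
qed

lemma nrm2_zero:
  assumes "nrm2 K v = 0" "a < K" shows "v a = 0"
proof -
  have "(\<Sum>a<K. (cmod (v a))\<^sup>2) = 0" using assms(1) unfolding nrm2_def .
  then have "\<forall>a\<in>{..<K}. (cmod (v a))\<^sup>2 = 0" by (subst (asm) sum_nonneg_eq_0_iff) auto
  then show ?thesis using assms(2) by simp
qed

lemma sf_bound:
  "cmod (sf K M v v) \<le> (\<Sum>a<K. \<Sum>b<K. cmod (M a b)) * nrm2 K v"
proof -
  let ?r = "sqrt (nrm2 K v)"
  have rr: "?r * ?r = nrm2 K v" using nrm2_nonneg by simp
  have "cmod (sf K M v v) \<le> (\<Sum>a<K. \<Sum>b<K. cmod (cnj (v a) * M a b * v b))"
    unfolding sf_def by (rule order_trans[OF norm_sum sum_mono[OF norm_sum]])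
  also have "\<dots> \<le> (\<Sum>a<K. \<Sum>b<K. cmod (M a b) * (?r * ?r))"
  proof (intro sum_mono)
    fix a b assume "a \<in> {..<K}" "b \<in> {..<K}"
    then have "cmod (v a) \<le> ?r" "cmod (v b) \<le> ?r" by (auto intro: cmod_le_nrm)
    then have "cmod (v a) * cmod (v b) \<le> ?r * ?r" by (intro mult_mono) (auto simp: nrm2_nonneg)
    then have "cmod (M a b) * (cmod (v a) * cmod (v b)) \<le> cmod (M a b) * (?r * ?r)"
      by (intro mult_left_mono) auto
    then show "cmod (cnj (v a) * M a b * v b) \<le> cmod (M a b) * (?r * ?r)"
      by (simp add: norm_mult mult_ac)
  qed
  also have "\<dots> = (\<Sum>a<K. \<Sum>b<K. cmod (M a b)) * nrm2 K v"
    unfolding rr by (simp add: sum_distrib_right)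
  finally show ?thesis .
qed

lemma mv_bound:
  "nrm2 K (mv K M v) \<le> (\<Sum>a<K. (\<Sum>b<K. cmod (M a b))\<^sup>2) * nrm2 K v"
proof -
  let ?r = "sqrt (nrm2 K v)"
  have rr: "?r\<^sup>2 = nrm2 K v" using nrm2_nonneg by simp
  have "nrm2 K (mv K M v) = (\<Sum>a<K. (cmod (\<Sum>b<K. M a b * v b))\<^sup>2)"
    unfolding nrm2_def mv_def ..
  also have "\<dots> \<le> (\<Sum>a<K. ((\<Sum>b<K. cmod (M a b)) * ?r)\<^sup>2)"
  proof (intro sum_mono power_mono)
    fix a assume "a \<in> {..<K}"
    have "cmod (\<Sum>b<K. M a b * v b) \<le> (\<Sum>b<K. cmod (M a b * v b))" by (rule norm_sum)
    also have "\<dots> \<le> (\<Sum>b<K. cmod (M a b) * ?r)"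
      by (intro sum_mono) (auto simp: norm_mult intro!: mult_left_mono cmod_le_nrm)
    finally show "cmod (\<Sum>b<K. M a b * v b) \<le> (\<Sum>b<K. cmod (M a b)) * ?r"
      by (simp add: sum_distrib_right)
  qed auto
  also have "\<dots> = (\<Sum>a<K. (\<Sum>b<K. cmod (M a b))\<^sup>2) * nrm2 K v"
    unfolding power_mult_distrib rr by (simp add: sum_distrib_right)
  finally show ?thesis .
qed

lemma inv_left:
  assumes "is_inverse K M B" "i < K"
  shows "mv K M (mv K B u) i = u i"
proof -
  have "mv K M (mv K B u) i = (\<Sum>k<K. \<Sum>j<K. M i k * B k j * u j)"
    unfolding mv_def by (simp add: sum_distrib_left mult.assoc)
  also have "\<dots> = (\<Sum>j<K. (\<Sum>k<K. M i k * B k j) * u j)"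
    by (subst sum.swap) (simp add: sum_distrib_right)
  also have "\<dots> = (\<Sum>j<K. (if i = j then 1 else 0) * u j)"
    using assms unfolding is_inverse_def by (intro sum.cong) auto
  also have "\<dots> = (\<Sum>j<K. if i = j then u j else 0)" by (intro sum.cong) auto
  also have "\<dots> = u i" using assms(2) by simp
  finally show ?thesis .
qed

lemma inv_right:
  assumes "is_inverse K M B" "i < K"
  shows "mv K B (mv K M u) i = u i"
proof -
  have "is_inverse K B M" using assms(1) unfolding is_inverse_def by blast
  then show ?thesis using inv_left assms(2) by blast
qed

lemma ip_cong: "(\<And>a. a < K \<Longrightarrow> u a = u' a) \<Longrightarrow> ip K v u = ip K v u'"
  unfolding ip_def by (intro sum.cong) auto

lemma nrm2_cong: "(\<And>a. a < K \<Longrightarrow> u a = u' a) \<Longrightarrow> nrm2 K u = nrm2 K u'"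
  unfolding nrm2_def by (intro sum.cong) auto

lemma ip_self: "ip K v v = complex_of_real (nrm2 K v)"
proof -
  have "(\<Sum>a<K. cnj (v a) * v a) = (\<Sum>a<K. complex_of_real ((cmod (v a))\<^sup>2))"
    by (intro sum.cong refl) (metis complex_norm_square mult.commute)
  then show ?thesis unfolding ip_def nrm2_def by simp
qed

lemma coercive:
  assumes real: "\<And>v. Im (sf K M v v) = 0" and pos: "\<And>v. Re (sf K M v v) \<ge> 0"
    and inv: "is_inverse K M B"
  shows "\<exists>\<kappa>\<ge>0. \<forall>v. nrm2 K v \<le> \<kappa> * Re (sf K M v v)"
proof -
  define C where "C = (\<Sum>a<K. \<Sum>b<K. cmod (M a b))"
  define CB where "CB = (\<Sum>a<K. (\<Sum>b<K. cmod (B a b))\<^sup>2)"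
  have C0: "C \<ge> 0" unfolding C_def by (simp add: sum_nonneg)
  have CB0: "CB \<ge> 0" unfolding CB_def by (simp add: sum_nonneg)
  have "nrm2 K v \<le> (CB * C) * Re (sf K M v v)" for v
  proof -
    let ?w = "mv K M v"
    have s1: "sf K M ?w v = complex_of_real (nrm2 K ?w)"
      unfolding sf_mv ip_self ..
    have "(nrm2 K ?w)\<^sup>2 \<le> Re (sf K M ?w ?w) * Re (sf K M v v)"
      using cs_form[OF real pos, of ?w v] unfolding s1 by simp
    also have "\<dots> \<le> (C * nrm2 K ?w) * Re (sf K M v v)"
    proof (rule mult_right_mono)
      show "Re (sf K M ?w ?w) \<le> C * nrm2 K ?w"
        using sf_bound[of K M ?w] complex_Re_le_cmod[of "sf K M ?w ?w"] unfolding C_def by linarith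
    qed (rule pos)
    finally have h: "(nrm2 K ?w)\<^sup>2 \<le> C * nrm2 K ?w * Re (sf K M v v)" by simp
    have w_le: "nrm2 K ?w \<le> C * Re (sf K M v v)"
    proof (cases "nrm2 K ?w = 0")
      case True then show ?thesis using C0 pos[of v] by simp
    next
      case False
      then have p: "nrm2 K ?w > 0" using nrm2_nonneg[of K ?w] by simp
      from h have "nrm2 K ?w * nrm2 K ?w \<le> nrm2 K ?w * (C * Re (sf K M v v))"
        by (simp add: power2_eq_square mult_ac)
      then show ?thesis using p by simp
    qed
    have "nrm2 K v = nrm2 K (mv K B ?w)"
      by (rule nrm2_cong) (use inv_right[OF inv] in auto)
    also have "\<dots> \<le> CB * nrm2 K ?w" unfolding CB_def by (rule mv_bound)
    also have "\<dots> \<le> CB * (C * Re (sf K M v v))" using w_le CB0 by (rule mult_left_mono)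
    finally show ?thesis by (simp add: mult_ac)
  qed
  then show ?thesis using CB0 C0 by (intro exI[of _ "CB * C"]) auto
qed


lemma sf_tendsto:
  assumes "\<And>a b. a < K \<Longrightarrow> b < K \<Longrightarrow> ((\<lambda>E. D E a b) \<longlongrightarrow> Dbar a b) F"
    and "\<And>a. a < K \<Longrightarrow> ((\<lambda>E. v E a) \<longlongrightarrow> vb a) F"
    and "\<And>a. a < K \<Longrightarrow> ((\<lambda>E. w E a) \<longlongrightarrow> wb a) F"
  shows "((\<lambda>E. sf K (D E) (v E) (w E)) \<longlongrightarrow> sf K Dbar vb wb) F"
  unfolding sf_def by (intro tendsto_sum tendsto_mult tendsto_cnj) (use assms in auto)

lemma ip_tendsto:
  assumes "\<And>a. a < K \<Longrightarrow> ((\<lambda>E. v E a) \<longlongrightarrow> vb a) F"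
    and "\<And>a. a < K \<Longrightarrow> ((\<lambda>E. w E a) \<longlongrightarrow> wb a) F"
  shows "((\<lambda>E. ip K (v E) (w E)) \<longlongrightarrow> ip K vb wb) F"
  unfolding ip_def by (intro tendsto_sum tendsto_mult tendsto_cnj) (use assms in auto)

lemma mv_tendsto:
  assumes "\<And>a. a < K \<Longrightarrow> ((\<lambda>E. w E a) \<longlongrightarrow> wb a) F"
  shows "((\<lambda>E. mv K M (w E) a) \<longlongrightarrow> mv K M wb a) F"
  unfolding mv_def by (intro tendsto_sum tendsto_mult tendsto_const) (use assms in auto)

lemma sf_diff: "sf K M v v - sf K M' v v = sf K (\<lambda>a b. M a b - M' a b) v v"
  unfolding sf_def by (simp add: sum_subtractf[symmetric] algebra_simps)

lemma ip_zero: "nrm2 K v = 0 \<Longrightarrow> ip K v u = 0"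
  unfolding ip_def using nrm2_zero by (auto intro!: sum.neutral)

lemma partB:
  fixes K :: nat and D :: "real \<Rightarrow> nat \<Rightarrow> nat \<Rightarrow> complex" and Dbar B :: "nat \<Rightarrow> nat \<Rightarrow> complex"
    and u :: "real \<Rightarrow> nat \<Rightarrow> complex" and ubar :: "nat \<Rightarrow> complex" and Dl :: "real \<Rightarrow> real"
  assumes inv: "is_inverse K Dbar B"
    and Dlim: "\<And>a b. a < K \<Longrightarrow> b < K \<Longrightarrow> ((\<lambda>E. D E a b) \<longlongrightarrow> Dbar a b) at_top"
    and ulim: "\<And>a. a < K \<Longrightarrow> ((\<lambda>E. u E a) \<longlongrightarrow> ubar a) at_top"
    and psd_real: "\<And>E v. E > 0 \<Longrightarrow> Im (sf K (D E) v v) = 0"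
    and psd_pos: "\<And>E v. E > 0 \<Longrightarrow> Re (sf K (D E) v v) \<ge> 0"
    and unz: "a0 < K" "ubar a0 \<noteq> 0"
    and upper: "\<And>E v. E > 0 \<Longrightarrow> (cmod (ip K v (u E)))\<^sup>2 / Re (sf K (D E) v v) \<le> Dl E"
    and att: "\<And>E. E > 0 \<Longrightarrow> \<exists>v. Dl E = (cmod (ip K v (u E)))\<^sup>2 / Re (sf K (D E) v v)"
  shows "(Dl \<longlongrightarrow> Re (sf K Dbar (mv K B ubar) (mv K B ubar))) at_top"
proof -
  have evpos: "eventually (\<lambda>E::real. E > 0) at_top" by (rule eventually_gt_at_top)
  have Dbar_real: "Im (sf K Dbar v v) = 0" for v
  proof -
    have lim: "((\<lambda>E. Im (sf K (D E) v v)) \<longlongrightarrow> Im (sf K Dbar v v)) at_top"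
      by (intro tendsto_Im sf_tendsto Dlim tendsto_const)
    have "eventually (\<lambda>E. Im (sf K (D E) v v) = 0) at_top"
      using evpos by eventually_elim (rule psd_real)
    then have "((\<lambda>E. Im (sf K (D E) v v)) \<longlongrightarrow> 0) at_top" by (rule tendsto_eventually)
    then show ?thesis using tendsto_unique[OF _ lim] by simp
  qed
  have Dbar_pos: "Re (sf K Dbar v v) \<ge> 0" for v
  proof -
    have lim: "((\<lambda>E. Re (sf K (D E) v v)) \<longlongrightarrow> Re (sf K Dbar v v)) at_top"
      by (intro tendsto_Re sf_tendsto Dlim tendsto_const)
    have "eventually (\<lambda>E. 0 \<le> Re (sf K (D E) v v)) at_top"
      using evpos by eventually_elim (rule psd_pos)
    then show ?thesis using tendsto_lowerbound[OF lim] by simp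
  qed
  obtain \<kappa> where k0: "\<kappa> \<ge> 0" and kap: "\<And>v. nrm2 K v \<le> \<kappa> * Re (sf K Dbar v v)"
    using coercive[OF Dbar_real Dbar_pos inv] by blast
  define vs where "vs = mv K B ubar"
  define L where "L = Re (sf K Dbar vs vs)"
  have Mvs: "a < K \<Longrightarrow> mv K Dbar vs a = ubar a" for a
    unfolding vs_def by (rule inv_left[OF inv])
  have nvs: "nrm2 K vs > 0"
  proof (rule ccontr)
    assume "\<not> nrm2 K vs > 0"
    then have z: "nrm2 K vs = 0" using nrm2_nonneg[of K vs] by simp
    have "mv K Dbar vs a0 = 0" unfolding mv_def using nrm2_zero[OF z] by (auto intro!: sum.neutral)
    then show False using Mvs[OF unz(1)] unz(2) by simp
  qed
  have Lpos: "L > 0"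
  proof (rule ccontr)
    assume "\<not> L > 0"
    then have "\<kappa> * L \<le> 0" using k0 by (simp add: mult_nonneg_nonpos)
    then show False using kap[of vs] nvs unfolding L_def by simp
  qed
  have ipvs: "ip K vs ubar = complex_of_real L"
  proof -
    have "ip K vs ubar = ip K vs (mv K Dbar vs)" by (rule ip_cong) (simp add: Mvs)
    also have "\<dots> = sf K Dbar vs vs" by (simp add: sf_mv)
    also have "\<dots> = complex_of_real L" unfolding L_def using Dbar_real[of vs] by (simp add: complex_eq_iff)
    finally show ?thesis .
  qed
  define fl where "fl = (\<lambda>E. (cmod (ip K vs (u E)))\<^sup>2 / Re (sf K (D E) vs vs))"
  have fl_lim: "(fl \<longlongrightarrow> L) at_top"
  proof -
    have "(fl \<longlongrightarrow> (cmod (ip K vs ubar))\<^sup>2 / Re (sf K Dbar vs vs)) at_top"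
      unfolding fl_def
      by (intro tendsto_divide tendsto_power tendsto_norm tendsto_Re ip_tendsto sf_tendsto Dlim ulim tendsto_const)
        (use Lpos L_def in auto)
    moreover have "(cmod (ip K vs ubar))\<^sup>2 / Re (sf K Dbar vs vs) = L"
      unfolding ipvs L_def[symmetric] using Lpos by (simp add: power2_eq_square)
    ultimately show ?thesis by simp
  qed
  have ev_low: "eventually (\<lambda>E. fl E \<le> Dl E) at_top"
    using evpos by eventually_elim (unfold fl_def, rule upper)
  define \<epsilon> where "\<epsilon> = (\<lambda>E. \<Sum>a<K. \<Sum>b<K. cmod (D E a b - Dbar a b))"
  have eps0: "\<epsilon> E \<ge> 0" for E unfolding \<epsilon>_def by (simp add: sum_nonneg)
  have eps_lim: "(\<epsilon> \<longlongrightarrow> 0) at_top"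
  proof -
    have "(\<epsilon> \<longlongrightarrow> (\<Sum>a<K. \<Sum>b<K. cmod (Dbar a b - Dbar a b))) at_top"
      unfolding \<epsilon>_def by (intro tendsto_sum tendsto_norm tendsto_diff Dlim tendsto_const) auto
    then show ?thesis by simp
  qed
  define P where "P = (\<lambda>E. Re (sf K Dbar (mv K B (u E)) (mv K B (u E))))"
  define g where "g = (\<lambda>E. P E / (1 - \<epsilon> E * \<kappa>))"
  have g_lim: "(g \<longlongrightarrow> L) at_top"
  proof -
    have "(g \<longlongrightarrow> L / (1 - 0 * \<kappa>)) at_top"
      unfolding g_def P_def L_def vs_def
      by (intro tendsto_divide tendsto_Re sf_tendsto tendsto_diff tendsto_mult eps_lim mv_tendsto ulim tendsto_const) auto
    then show ?thesis by simp
  qed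
  have ev_small: "eventually (\<lambda>E. \<epsilon> E * \<kappa> < 1/2) at_top"
  proof -
    have "((\<lambda>E. \<epsilon> E * \<kappa>) \<longlongrightarrow> 0 * \<kappa>) at_top" by (intro tendsto_mult eps_lim tendsto_const)
    then show ?thesis by (rule order_tendstoD(2)) simp
  qed
  have ev_up: "eventually (\<lambda>E. Dl E \<le> g E) at_top"
    using evpos ev_small
  proof eventually_elim
    case (elim E)
    then have E0: "E > 0" and sm: "\<epsilon> E * \<kappa> < 1/2" by auto
    have P0: "P E \<ge> 0" unfolding P_def by (rule Dbar_pos)
    have den: "1 - \<epsilon> E * \<kappa> > 0" using sm by simp
    obtain v where v: "Dl E = (cmod (ip K v (u E)))\<^sup>2 / Re (sf K (D E) v v)" using att[OF E0] by blast
    show ?case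
    proof (cases "nrm2 K v = 0")
      case True
      then show ?thesis using v ip_zero[OF True] P0 den unfolding g_def by simp
    next
      case False
      then have nv: "nrm2 K v > 0" using nrm2_nonneg[of K v] by simp
      define qb where "qb = Re (sf K Dbar v v)"
      define q where "q = Re (sf K (D E) v v)"
      have kq: "nrm2 K v \<le> \<kappa> * qb" unfolding qb_def by (rule kap)
      have qbpos: "qb > 0"
      proof (rule ccontr)
        assume "\<not> qb > 0"
        then have "\<kappa> * qb \<le> 0" using k0 by (simp add: mult_nonneg_nonpos)
        then show False using kq nv by simp
      qed
      have diff: "cmod (sf K (D E) v v - sf K Dbar v v) \<le> \<epsilon> E * nrm2 K v"
        unfolding sf_diff \<epsilon>_def by (rule sf_bound)
      have "q \<ge> qb - \<epsilon> E * nrm2 K v"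
      proof -
        have "Re (sf K Dbar v v - sf K (D E) v v) \<le> cmod (sf K (D E) v v - sf K Dbar v v)"
          by (metis complex_Re_le_cmod norm_minus_commute)
        then show ?thesis using diff unfolding q_def qb_def by simp
      qed
      moreover have "\<epsilon> E * nrm2 K v \<le> \<epsilon> E * (\<kappa> * qb)" using kq eps0[of E] by (rule mult_left_mono)
      ultimately have qge: "q \<ge> qb * (1 - \<epsilon> E * \<kappa>)" by (simp add: algebra_simps)
      have dpos: "qb * (1 - \<epsilon> E * \<kappa>) > 0" using qbpos den by simp
      have num: "(cmod (ip K v (u E)))\<^sup>2 \<le> qb * P E"
      proof -
        have "ip K v (u E) = ip K v (mv K Dbar (mv K B (u E)))"
          by (rule ip_cong) (simp add: inv_left[OF inv])
        also have "\<dots> = sf K Dbar v (mv K B (u E))" by (simp add: sf_mv)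
        finally have "ip K v (u E) = sf K Dbar v (mv K B (u E))" .
        then show ?thesis unfolding qb_def P_def using cs_form[OF Dbar_real Dbar_pos] by simp
      qed
      have "Dl E = (cmod (ip K v (u E)))\<^sup>2 / q" unfolding v q_def ..
      also have "\<dots> \<le> (cmod (ip K v (u E)))\<^sup>2 / (qb * (1 - \<epsilon> E * \<kappa>))"
        by (rule divide_left_mono) (use qge dpos in auto)
      also have "\<dots> \<le> (qb * P E) / (qb * (1 - \<epsilon> E * \<kappa>))"
        by (rule divide_right_mono) (use num dpos in auto)
      also have "\<dots> = g E" unfolding g_def using qbpos by simp
      finally show ?thesis .
    qed
  qed
  show ?thesis
    unfolding L_def[symmetric] vs_def[symmetric]
    by (rule tendsto_sandwich[OF ev_low ev_up fl_lim g_lim])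
qed

lemma partB_value:
  assumes inv: "is_inverse K Dbar B" and real: "Im (sf K Dbar (mv K B ubar) (mv K B ubar)) = 0"
  shows "(\<Sum>a<K. \<Sum>b<K. cnj (ubar a) * B a b * ubar b) = complex_of_real (Re (sf K Dbar (mv K B ubar) (mv K B ubar)))"
proof -
  let ?vs = "mv K B ubar"
  have "sf K Dbar ?vs ?vs = ip K ?vs (mv K Dbar ?vs)" by (simp add: sf_mv)
  also have "\<dots> = ip K ?vs ubar" by (rule ip_cong) (simp add: inv_left[OF inv])
  also have "\<dots> = cnj (\<Sum>a<K. \<Sum>b<K. cnj (ubar a) * B a b * ubar b)"
    unfolding ip_def mv_def by (simp add: sum_distrib_left sum_distrib_right mult_ac)
  finally have e: "sf K Dbar ?vs ?vs = cnj (\<Sum>a<K. \<Sum>b<K. cnj (ubar a) * B a b * ubar b)" .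
  have "(\<Sum>a<K. \<Sum>b<K. cnj (ubar a) * B a b * ubar b) = cnj (sf K Dbar ?vs ?vs)"
    unfolding e by simp
  also have "\<dots> = complex_of_real (Re (sf K Dbar ?vs ?vs))" using real by (simp add: complex_eq_iff)
  finally show ?thesis .
qed


lemma if_mult_zero: "(if c then a else 0) * b = (if c then a * b else (0::'a::mult_zero))"
  by simp
lemma mult_if_zero: "b * (if c then a else 0) = (if c then b * a else (0::'a::mult_zero))"
  by simp

definition Amat :: "nat \<Rightarrow> nat \<Rightarrow> (nat \<Rightarrow> nat \<Rightarrow> complex) \<Rightarrow> nat \<Rightarrow> nat \<Rightarrow> nat \<Rightarrow> complex" where
  "Amat Q T h n = matmul Q (circ Q T h n) (dft_adj Q)"

lemma yrx_eq: "yrx Q T h Es \<omega> n p = (\<Sum>l<Q. Amat Q T h n p l * xt Es \<omega> l) + noise \<omega> n p"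
proof -
  have "matvec Q (circ Q T h n) (xsig Q Es \<omega>) p = (\<Sum>k<Q. \<Sum>l<Q. circ Q T h n p k * (dft_adj Q k l * xt Es \<omega> l))"
    unfolding xsig_def matvec_def by (simp add: sum_distrib_left)
  also have "\<dots> = (\<Sum>l<Q. \<Sum>k<Q. circ Q T h n p k * (dft_adj Q k l * xt Es \<omega> l))"
    by (rule sum.swap)
  also have "\<dots> = (\<Sum>l<Q. Amat Q T h n p l * xt Es \<omega> l)"
    unfolding Amat_def matmul_def by (simp add: sum_distrib_right mult.assoc)
  finally have "matvec Q (circ Q T h n) (xsig Q Es \<omega>) p = (\<Sum>l<Q. Amat Q T h n p l * xt Es \<omega> l)" .
  then show ?thesis unfolding yrx_def by simp
qed

lemma Amat_simp:
  assumes Q: "Q > 0" and p: "p < Q" and l: "l < Q"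
  shows "Amat Q T h n p l = dft_adj Q p l * lam Q T h n l"
proof -
  let ?F = "dft Q" and ?G = "dft_adj Q" and ?L = "lam Q T h n"
  have inner: "(\<Sum>i<Q. diagm ?L j i * ?F i k) = ?L j * ?F j k" if "j < Q" for j k
    using that unfolding diagm_def by (simp add: if_mult_zero)
  have "Amat Q T h n p l = (\<Sum>k<Q. (\<Sum>j<Q. ?G p j * (?L j * ?F j k)) * ?G k l)"
    unfolding Amat_def circ_def matmul_def using inner by simp
  also have "\<dots> = (\<Sum>k<Q. \<Sum>j<Q. ?G p j * ?L j * (?F j k * ?G k l))"
    by (simp add: sum_distrib_right sum_distrib_left mult_ac)
  also have "\<dots> = (\<Sum>j<Q. \<Sum>k<Q. ?G p j * ?L j * (?F j k * ?G k l))"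
    by (rule sum.swap)
  also have "\<dots> = (\<Sum>j<Q. ?G p j * ?L j * (\<Sum>k<Q. ?F j k * ?G k l))"
    by (simp add: sum_distrib_left)
  also have "\<dots> = (\<Sum>j<Q. ?G p j * ?L j * (if j = l then 1 else 0))"
    by (intro sum.cong refl) (simp add: dft_orth[OF Q _ l])
  also have "\<dots> = ?G p l * ?L l" using l by (simp add: mult_if_zero)
  finally show ?thesis .
qed

definition cxc :: "real \<Rightarrow> nat \<Rightarrow> nat \<Rightarrow> nat \<Rightarrow> complex" where
  "cxc Es p = (\<lambda>m q. if m = 0 \<and> q = p then complex_of_real (sqrt (Es/2)) else 0)"

definition cyc :: "nat \<Rightarrow> nat \<Rightarrow> (nat \<Rightarrow> nat \<Rightarrow> complex) \<Rightarrow> real \<Rightarrow> nat \<Rightarrow> nat \<Rightarrow> nat \<Rightarrow> nat \<Rightarrow> complex" where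
  "cyc Q T h Es n p = (\<lambda>m q. (if m = 0 then complex_of_real (sqrt (Es/2)) * Amat Q T h n p q else 0)
      + (if m = Suc n \<and> q = p then complex_of_real (sqrt (1/2)) else 0))"

lemma xt_lin:
  assumes "p < Q"
  shows "xt Es \<omega> p = lin N Q (cxc Es p) \<omega>"
proof -
  have "lin N Q (cxc Es p) \<omega> = (\<Sum>m\<le>N. if m = 0 then (\<Sum>q<Q. if q = p then complex_of_real (sqrt (Es/2)) * Zc \<omega> 0 q else 0) else 0)"
    unfolding lin_def cxc_def by (intro sum.cong refl) (auto simp: if_mult_zero)
  also have "\<dots> = complex_of_real (sqrt (Es/2)) * Zc \<omega> 0 p" using assms by simp
  finally show ?thesis unfolding xt_def Zc_def by simp
qed

lemma yrx_lin:
  assumes "n < N" "p < Q"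
  shows "yrx Q T h Es \<omega> n p = lin N Q (cyc Q T h Es n p) \<omega>"
proof -
  have "lin N Q (cyc Q T h Es n p) \<omega>
      = (\<Sum>m\<le>N. \<Sum>q<Q. (if m = 0 then complex_of_real (sqrt (Es/2)) * Amat Q T h n p q * Zc \<omega> m q else 0))
      + (\<Sum>m\<le>N. \<Sum>q<Q. (if m = Suc n \<and> q = p then complex_of_real (sqrt (1/2)) * Zc \<omega> m q else 0))"
    unfolding lin_def cyc_def distrib_right sum.distrib if_mult_zero by (intro arg_cong2[where f="(+)"] sum.cong refl; auto)
  also have "\<dots> = (\<Sum>q<Q. complex_of_real (sqrt (Es/2)) * Amat Q T h n p q * Zc \<omega> 0 q)
      + complex_of_real (sqrt (1/2)) * Zc \<omega> (Suc n) p"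
  proof -
    have "(\<Sum>m\<le>N. \<Sum>q<Q. (if m = Suc n \<and> q = p then complex_of_real (sqrt (1/2)) * Zc \<omega> m q else 0))
        = (\<Sum>m\<le>N. if m = Suc n then (\<Sum>q<Q. if q = p then complex_of_real (sqrt (1/2)) * Zc \<omega> m q else 0) else 0)"
      by (intro sum.cong refl) auto
    also have "\<dots> = complex_of_real (sqrt (1/2)) * Zc \<omega> (Suc n) p" using assms by simp
    finally have e2: "(\<Sum>m\<le>N. \<Sum>q<Q. (if m = Suc n \<and> q = p then complex_of_real (sqrt (1/2)) * Zc \<omega> m q else 0))
        = complex_of_real (sqrt (1/2)) * Zc \<omega> (Suc n) p" .
    have e1: "(\<Sum>m\<le>N. \<Sum>q<Q. (if m = 0 then complex_of_real (sqrt (Es/2)) * Amat Q T h n p q * Zc \<omega> m q else 0))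
        = (\<Sum>q<Q. complex_of_real (sqrt (Es/2)) * Amat Q T h n p q * Zc \<omega> 0 q)"
    proof -
      have "(\<Sum>m\<le>N. \<Sum>q<Q. (if m = 0 then complex_of_real (sqrt (Es/2)) * Amat Q T h n p q * Zc \<omega> m q else 0))
        = (\<Sum>m\<le>N. if m = 0 then (\<Sum>q<Q. complex_of_real (sqrt (Es/2)) * Amat Q T h n p q * Zc \<omega> m q) else 0)"
        by (intro sum.cong refl) auto
      then show ?thesis by simp
    qed
    show ?thesis unfolding e1 e2 ..
  qed
  also have "\<dots> = yrx Q T h Es \<omega> n p"
    unfolding yrx_eq xt_def noise_def Zc_def by (simp add: mult_ac)
  finally show ?thesis by simp
qed

lemma cyc_sq:
  assumes "Es \<ge> 0" "n < N" "p < Q"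
  shows "(\<Sum>m\<le>N. \<Sum>q<Q. (cmod (cyc Q T h Es n p m q))\<^sup>2) = Es/2 * (\<Sum>q<Q. (cmod (Amat Q T h n p q))\<^sup>2) + 1/2"
proof -
  have pw: "(cmod (cyc Q T h Es n p m q))\<^sup>2 = (if m = 0 then Es/2 * (cmod (Amat Q T h n p q))\<^sup>2 else 0)
       + (if m = Suc n \<and> q = p then 1/2 else 0)" for m q
    using assms(1) unfolding cyc_def by (auto simp: norm_mult power_mult_distrib)
  have "(\<Sum>m\<le>N. \<Sum>q<Q. (cmod (cyc Q T h Es n p m q))\<^sup>2)
      = (\<Sum>m\<le>N. if m = 0 then (\<Sum>q<Q. Es/2 * (cmod (Amat Q T h n p q))\<^sup>2) else 0)
      + (\<Sum>m\<le>N. if m = Suc n then (\<Sum>q<Q. if q = p then 1/2 else 0) else 0)"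
    unfolding pw sum.distrib by (intro arg_cong2[where f="(+)"] sum.cong refl) auto
  also have "\<dots> = Es/2 * (\<Sum>q<Q. (cmod (Amat Q T h n p q))\<^sup>2) + 1/2"
    using assms by (simp add: sum_distrib_left)
  finally show ?thesis .
qed

lemma cyc_cxc:
  assumes "Es \<ge> 0" "p' < Q"
  shows "(\<Sum>m\<le>N. \<Sum>q<Q. cyc Q T h Es n p m q * cnj (cxc Es p' m q)) = complex_of_real (Es/2) * Amat Q T h n p p'"
proof -
  have pw: "cyc Q T h Es n p m q * cnj (cxc Es p' m q)
      = (if m = 0 then (if q = p' then complex_of_real (Es/2) * Amat Q T h n p p' else 0) else 0)" for m q
  proof -
    have "complex_of_real (sqrt (Es/2)) * complex_of_real (sqrt (Es/2)) = complex_of_real (Es/2)"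
      using assms(1) by (simp flip: of_real_mult)
    then show ?thesis unfolding cxc_def cyc_def by (auto simp: mult_ac)
  qed
  have "(\<Sum>m\<le>N. \<Sum>q<Q. cyc Q T h Es n p m q * cnj (cxc Es p' m q))
     = (\<Sum>m\<le>N. if m = 0 then complex_of_real (Es/2) * Amat Q T h n p p' else 0)"
  proof (rule sum.cong[OF refl])
    fix m show "(\<Sum>q<Q. cyc Q T h Es n p m q * cnj (cxc Es p' m q)) = (if m = 0 then complex_of_real (Es/2) * Amat Q T h n p p' else 0)"
      unfolding pw using assms by (cases "m = 0") simp_all
  qed
  then show ?thesis by simp
qed


lemma borel_measurable_cnj'[measurable (raw)]:
  "f \<in> borel_measurable M \<Longrightarrow> (\<lambda>x. cnj (f x)) \<in> borel_measurable M"
  by (rule borel_measurable_continuous_on[where f=cnj]) (auto intro: continuous_intros)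

lemma csgn_lin_repr:
  "csgn (lin N Q c \<omega>) = (complex_of_real (sgn (\<Sum>i\<in>I0 N Q. ar c i * \<omega> i))
      + \<i> * complex_of_real (sgn (\<Sum>i\<in>I0 N Q. ai c i * \<omega> i))) / complex_of_real (sqrt 2)"
  unfolding csgn_def Re_lin[symmetric] Im_lin[symmetric] Complex_eq by simp

lemma meas_csgn_lin[measurable]: "(\<lambda>\<omega>. csgn (lin N Q c \<omega>)) \<in> borel_measurable (Omega N Q)"
  unfolding csgn_lin_repr Omega_I0 by measurable

lemma lin_repr: "lin N Q c \<omega> = complex_of_real (\<Sum>i\<in>I0 N Q. ar c i * \<omega> i) + \<i> * complex_of_real (\<Sum>i\<in>I0 N Q. ai c i * \<omega> i)"
  unfolding Re_lin[symmetric] Im_lin[symmetric] by (simp add: complex_eq_iff)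

lemma meas_lin[measurable]: "(\<lambda>\<omega>. lin N Q c \<omega>) \<in> borel_measurable (Omega N Q)"
  unfolding lin_repr Omega_I0 by measurable

lemma norm_csgn: "cmod (csgn z) \<le> 1"
proof -
  have "(cmod (Complex (sgn (Re z)) (sgn (Im z))))\<^sup>2 \<le> 2"
    unfolding cmod_power2 by (auto simp: sgn_if)
  then have "cmod (Complex (sgn (Re z)) (sgn (Im z))) \<le> sqrt 2"
    by (simp add: real_le_rsqrt)
  then show ?thesis unfolding csgn_def by (simp add: norm_divide)
qed

lemma integrable_csgn2:
  "integrable (Omega N Q) (\<lambda>\<omega>. csgn (lin N Q c \<omega>) * cnj (csgn (lin N Q d \<omega>)))"
  unfolding Omega_I0
proof (rule integrable_bounded_PiM[where B=1])
  show "(\<lambda>\<omega>. csgn (lin N Q c \<omega>) * cnj (csgn (lin N Q d \<omega>))) \<in> borel_measurable (PiM (I0 N Q) (\<lambda>_. std_normal))"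
    using meas_csgn_lin[of N Q c] meas_csgn_lin[of N Q d] unfolding Omega_I0 by measurable
  show "norm (csgn (lin N Q c x) * cnj (csgn (lin N Q d x))) \<le> 1" for x
    using norm_csgn[of "lin N Q c x"] norm_csgn[of "lin N Q d x"]
    by (simp add: norm_mult mult_le_one)
qed

lemma integrable_csgn_lin:
  "integrable (Omega N Q) (\<lambda>\<omega>. csgn (lin N Q c \<omega>) * cnj (lin N Q d \<omega>))"
proof -
  let ?M = "PiM (I0 N Q) (\<lambda>_. std_normal)"
  let ?YR = "\<lambda>\<omega>. \<Sum>i\<in>I0 N Q. ar c i * \<omega> i"
  let ?YI = "\<lambda>\<omega>. \<Sum>i\<in>I0 N Q. ai c i * \<omega> i"
  let ?XR = "\<lambda>\<omega>. \<Sum>i\<in>I0 N Q. ar d i * \<omega> i"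
  let ?XI = "\<lambda>\<omega>. \<Sum>i\<in>I0 N Q. ai d i * \<omega> i"
  define A1 where "A1 = (\<lambda>\<omega>. sgn (?YR \<omega>) * ?XR \<omega> + sgn (?YI \<omega>) * ?XI \<omega>)"
  define A2 where "A2 = (\<lambda>\<omega>. sgn (?YI \<omega>) * ?XR \<omega> - sgn (?YR \<omega>) * ?XI \<omega>)"
  have pw: "csgn (lin N Q c \<omega>) * cnj (lin N Q d \<omega>)
      = complex_of_real (A1 \<omega> / sqrt 2) + \<i> * complex_of_real (A2 \<omega> / sqrt 2)" for \<omega>
    unfolding A1_def A2_def csgn_def
    by (simp add: complex_eq_iff Re_lin[symmetric] Im_lin[symmetric] Re_divide Im_divide
        power2_eq_square add_divide_distrib diff_divide_distrib ring_distribs)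
  have i1: "integrable ?M (\<lambda>\<omega>. sgn (?YR \<omega>) * ?XR \<omega>)" "integrable ?M (\<lambda>\<omega>. sgn (?YI \<omega>) * ?XI \<omega>)"
     "integrable ?M (\<lambda>\<omega>. sgn (?YI \<omega>) * ?XR \<omega>)" "integrable ?M (\<lambda>\<omega>. sgn (?YR \<omega>) * ?XI \<omega>)"
    by (rule integrable_sgn_lin, simp)+
  have iA1: "integrable ?M A1" unfolding A1_def using i1 by auto
  have iA2: "integrable ?M A2" unfolding A2_def using i1 by auto
  have "integrable ?M (\<lambda>\<omega>. complex_of_real (A1 \<omega> / sqrt 2) + \<i> * complex_of_real (A2 \<omega> / sqrt 2))"
    using iA1 iA2 by (intro Bochner_Integration.integrable_add integrable_mult_right integrable_of_real) auto
  then show ?thesis unfolding Omega_I0 pw .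
qed

lemma rq_lin: "n < N \<Longrightarrow> p < Q \<Longrightarrow> rq Q T h Es \<omega> n p = csgn (lin N Q (cyc Q T h Es n p) \<omega>)"
  unfolding rq_def by (simp add: yrx_lin)

lemma int_r_xt:
  assumes "n < N" "p < Q" "p' < Q"
  shows "integrable (Omega N Q) (\<lambda>\<omega>. rq Q T h Es \<omega> n p * cnj (xt Es \<omega> p'))"
proof -
  have "integrable (Omega N Q) (\<lambda>\<omega>. csgn (lin N Q (cyc Q T h Es n p) \<omega>) * cnj (lin N Q (cxc Es p') \<omega>))"
    by (rule integrable_csgn_lin)
  then show ?thesis using assms by (simp add: rq_lin xt_lin[symmetric])
qed

lemma int_r_r:
  assumes "n < N" "p < Q" "m < N" "q < Q"
  shows "integrable (Omega N Q) (\<lambda>\<omega>. rq Q T h Es \<omega> n p * cnj (rq Q T h Es \<omega> m q))"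
proof -
  have "integrable (Omega N Q) (\<lambda>\<omega>. csgn (lin N Q (cyc Q T h Es n p) \<omega>) * cnj (csgn (lin N Q (cyc Q T h Es m q) \<omega>)))"
    by (rule integrable_csgn2)
  then show ?thesis using assms by (simp add: rq_lin)
qed

lemma E_r_xt:
  assumes Es: "Es \<ge> 0" and "n < N" "p < Q" "p' < Q"
  shows "(\<integral>\<omega>. rq Q T h Es \<omega> n p * cnj (xt Es \<omega> p') \<partial>Omega N Q)
    = complex_of_real (2 / (sqrt pi * sqrt (Es/2 * (\<Sum>q<Q. (cmod (Amat Q T h n p q))\<^sup>2) + 1/2)))
      * (complex_of_real (Es/2) * Amat Q T h n p p')"
proof -
  have "(\<integral>\<omega>. rq Q T h Es \<omega> n p * cnj (xt Es \<omega> p') \<partial>Omega N Q)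
      = (\<integral>\<omega>. csgn (lin N Q (cyc Q T h Es n p) \<omega>) * cnj (lin N Q (cxc Es p') \<omega>) \<partial>Omega N Q)"
    using assms by (simp add: rq_lin xt_lin[symmetric])
  also have "\<dots> = complex_of_real (2 / (sqrt pi * sqrt (\<Sum>m\<le>N. \<Sum>q<Q. (cmod (cyc Q T h Es n p m q))\<^sup>2)))
      * (\<Sum>m\<le>N. \<Sum>q<Q. cyc Q T h Es n p m q * cnj (cxc Es p' m q))"
    by (rule csgn_lin)
  also have "\<dots> = complex_of_real (2 / (sqrt pi * sqrt (Es/2 * (\<Sum>q<Q. (cmod (Amat Q T h n p q))\<^sup>2) + 1/2)))
      * (complex_of_real (Es/2) * Amat Q T h n p p')"
    using assms by (simp add: cyc_sq cyc_cxc)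
  finally show ?thesis .
qed


lemma num_formula:
  "(\<integral>\<omega>. (\<Sum>p<Q. cnj (xhat N Q T h Es w \<omega> p) * xt Es \<omega> p) \<partial>Omega N Q)
   = (\<Sum>p<Q. \<Sum>n<N. cnj (w n p) * (\<Sum>q<Q. cnj (dft Q p q) * cnj (\<integral>\<omega>. rq Q T h Es \<omega> n q * cnj (xt Es \<omega> p) \<partial>Omega N Q)))"
proof -
  let ?g = "\<lambda>p n q \<omega>. cnj (w n p) * cnj (dft Q p q) * cnj (rq Q T h Es \<omega> n q * cnj (xt Es \<omega> p))"
  have pw: "(\<Sum>p<Q. cnj (xhat N Q T h Es w \<omega> p) * xt Es \<omega> p) = (\<Sum>p<Q. \<Sum>n<N. \<Sum>q<Q. ?g p n q \<omega>)" for \<omega>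
    unfolding xhat_def matvec_def by (simp add: sum_distrib_left sum_distrib_right mult_ac)
  have ig: "integrable (Omega N Q) (?g p n q)" if "p < Q" "n < N" "q < Q" for p n q
    using int_r_xt[OF that(2,3,1), of T h Es] by (intro integrable_mult_right integrable_cnj)
  have i2: "integrable (Omega N Q) (\<lambda>\<omega>. \<Sum>q<Q. ?g p n q \<omega>)" if "p < Q" "n < N" for p n
    by (rule Bochner_Integration.integrable_sum) (use ig that in auto)
  have i1: "integrable (Omega N Q) (\<lambda>\<omega>. \<Sum>n<N. \<Sum>q<Q. ?g p n q \<omega>)" if "p < Q" for p
    by (rule Bochner_Integration.integrable_sum) (use i2 that in auto)
  have "(\<integral>\<omega>. (\<Sum>p<Q. cnj (xhat N Q T h Es w \<omega> p) * xt Es \<omega> p) \<partial>Omega N Q)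
      = (\<integral>\<omega>. (\<Sum>p<Q. \<Sum>n<N. \<Sum>q<Q. ?g p n q \<omega>) \<partial>Omega N Q)"
    unfolding pw ..
  also have "\<dots> = (\<Sum>p<Q. integral\<^sup>L (Omega N Q) (\<lambda>\<omega>. \<Sum>n<N. \<Sum>q<Q. ?g p n q \<omega>))"
    by (rule Bochner_Integration.integral_sum) (use i1 in auto)
  also have "\<dots> = (\<Sum>p<Q. \<Sum>n<N. integral\<^sup>L (Omega N Q) (\<lambda>\<omega>. \<Sum>q<Q. ?g p n q \<omega>))"
    by (rule sum.cong[OF refl], rule Bochner_Integration.integral_sum) (use i2 in auto)
  also have "\<dots> = (\<Sum>p<Q. \<Sum>n<N. \<Sum>q<Q. integral\<^sup>L (Omega N Q) (?g p n q))"
    by (intro sum.cong refl, rule Bochner_Integration.integral_sum) (use ig in auto)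
  also have "\<dots> = (\<Sum>p<Q. \<Sum>n<N. \<Sum>q<Q. cnj (w n p) * (cnj (dft Q p q) * cnj (\<integral>\<omega>. rq Q T h Es \<omega> n q * cnj (xt Es \<omega> p) \<partial>Omega N Q)))"
    by (intro sum.cong refl) (simp only: integral_mult_right_zero Bochner_Integration.integral_cnj mult.assoc)
  also have "\<dots> = (\<Sum>p<Q. \<Sum>n<N. cnj (w n p) * (\<Sum>q<Q. cnj (dft Q p q) * cnj (\<integral>\<omega>. rq Q T h Es \<omega> n q * cnj (xt Es \<omega> p) \<partial>Omega N Q)))"
    by (simp only: sum_distrib_left)
  finally show ?thesis .
qed

lemma den_formula:
  "complex_of_real (\<integral>\<omega>. (\<Sum>p<Q. (cmod (xhat N Q T h Es w \<omega> p))\<^sup>2) \<partial>Omega N Q)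
   = (\<Sum>p<Q. \<Sum>n<N. \<Sum>m<N. w n p * cnj (w m p) * Dblk N Q T h Es n m p p)"
proof -
  let ?r = "\<lambda>\<omega> n k. rq Q T h Es \<omega> n k"
  let ?g = "\<lambda>p n m k l \<omega>. (w n p * cnj (w m p) * (dft Q p k * cnj (dft Q p l))) * (?r \<omega> n k * cnj (?r \<omega> m l))"
  have pw: "complex_of_real (\<Sum>p<Q. (cmod (xhat N Q T h Es w \<omega> p))\<^sup>2) = (\<Sum>p<Q. \<Sum>m<N. \<Sum>n<N. \<Sum>l<Q. \<Sum>k<Q. ?g p n m k l \<omega>)" for \<omega>
  proof -
    have "complex_of_real (\<Sum>p<Q. (cmod (xhat N Q T h Es w \<omega> p))\<^sup>2) = (\<Sum>p<Q. xhat N Q T h Es w \<omega> p * cnj (xhat N Q T h Es w \<omega> p))"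
      by (simp only: of_real_sum complex_norm_square)
    also have "\<dots> = (\<Sum>p<Q. \<Sum>m<N. \<Sum>n<N. \<Sum>l<Q. \<Sum>k<Q. ?g p n m k l \<omega>)"
      unfolding xhat_def matvec_def by (simp add: sum_product sum_distrib_left mult_ac)
    finally show ?thesis .
  qed
  have ig: "integrable (Omega N Q) (?g p n m k l)" if "n < N" "m < N" "k < Q" "l < Q" for p n m k l
    using int_r_r[OF that(1,3,2,4), of T h Es] by (intro integrable_mult_right)
  have j4: "integrable (Omega N Q) (\<lambda>\<omega>. \<Sum>k<Q. ?g p n m k l \<omega>)" if "n < N" "m < N" "l < Q" for p n m l
    by (rule Bochner_Integration.integrable_sum) (use ig that in auto)
  have j3: "integrable (Omega N Q) (\<lambda>\<omega>. \<Sum>l<Q. \<Sum>k<Q. ?g p n m k l \<omega>)" if "n < N" "m < N" for p n m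
    by (rule Bochner_Integration.integrable_sum) (use j4 that in auto)
  have j2: "integrable (Omega N Q) (\<lambda>\<omega>. \<Sum>n<N. \<Sum>l<Q. \<Sum>k<Q. ?g p n m k l \<omega>)" if "m < N" for p m
    by (rule Bochner_Integration.integrable_sum) (use j3 that in auto)
  have j1: "integrable (Omega N Q) (\<lambda>\<omega>. \<Sum>m<N. \<Sum>n<N. \<Sum>l<Q. \<Sum>k<Q. ?g p n m k l \<omega>)" for p
    by (rule Bochner_Integration.integrable_sum) (use j2 in auto)
  have "complex_of_real (\<integral>\<omega>. (\<Sum>p<Q. (cmod (xhat N Q T h Es w \<omega> p))\<^sup>2) \<partial>Omega N Q)
      = (\<integral>\<omega>. complex_of_real (\<Sum>p<Q. (cmod (xhat N Q T h Es w \<omega> p))\<^sup>2) \<partial>Omega N Q)"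
    by (rule integral_complex_of_real[symmetric])
  also have "\<dots> = (\<integral>\<omega>. (\<Sum>p<Q. \<Sum>m<N. \<Sum>n<N. \<Sum>l<Q. \<Sum>k<Q. ?g p n m k l \<omega>) \<partial>Omega N Q)"
    unfolding pw ..
  also have "\<dots> = (\<Sum>p<Q. integral\<^sup>L (Omega N Q) (\<lambda>\<omega>. \<Sum>m<N. \<Sum>n<N. \<Sum>l<Q. \<Sum>k<Q. ?g p n m k l \<omega>))"
    by (rule Bochner_Integration.integral_sum) (use j1 in auto)
  also have "\<dots> = (\<Sum>p<Q. \<Sum>m<N. integral\<^sup>L (Omega N Q) (\<lambda>\<omega>. \<Sum>n<N. \<Sum>l<Q. \<Sum>k<Q. ?g p n m k l \<omega>))"
    by (rule sum.cong[OF refl], rule Bochner_Integration.integral_sum) (use j2 in auto)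
  also have "\<dots> = (\<Sum>p<Q. \<Sum>m<N. \<Sum>n<N. integral\<^sup>L (Omega N Q) (\<lambda>\<omega>. \<Sum>l<Q. \<Sum>k<Q. ?g p n m k l \<omega>))"
    by (rule sum.cong[OF refl], rule sum.cong[OF refl], rule Bochner_Integration.integral_sum) (use j3 in auto)
  also have "\<dots> = (\<Sum>p<Q. \<Sum>m<N. \<Sum>n<N. \<Sum>l<Q. integral\<^sup>L (Omega N Q) (\<lambda>\<omega>. \<Sum>k<Q. ?g p n m k l \<omega>))"
    by (rule sum.cong[OF refl], rule sum.cong[OF refl], rule sum.cong[OF refl], rule Bochner_Integration.integral_sum) (use j4 in auto)
  also have "\<dots> = (\<Sum>p<Q. \<Sum>m<N. \<Sum>n<N. \<Sum>l<Q. \<Sum>k<Q. integral\<^sup>L (Omega N Q) (?g p n m k l))"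
    by (intro sum.cong refl, rule Bochner_Integration.integral_sum) (use ig in auto)
  also have "\<dots> = (\<Sum>p<Q. \<Sum>m<N. \<Sum>n<N. w n p * cnj (w m p) * (\<Sum>l<Q. \<Sum>k<Q. (dft Q p k * cnj (dft Q p l)) * Rmat N Q T h Es n m k l))"
    unfolding Rmat_def by (simp add: sum_distrib_left mult.assoc)
  also have "\<dots> = (\<Sum>p<Q. \<Sum>m<N. \<Sum>n<N. w n p * cnj (w m p) * Dblk N Q T h Es n m p p)"
  proof (intro sum.cong refl arg_cong2[where f="(*)"])
    fix p n m
    show "(\<Sum>l<Q. \<Sum>k<Q. (dft Q p k * cnj (dft Q p l)) * Rmat N Q T h Es n m k l) = Dblk N Q T h Es n m p p"
      unfolding Dblk_def diagm_def matmul_def dft_adj_def by (simp add: sum_distrib_right sum_distrib_left mult_ac)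
  qed
  also have "\<dots> = (\<Sum>p<Q. \<Sum>n<N. \<Sum>m<N. w n p * cnj (w m p) * Dblk N Q T h Es n m p p)"
    by (rule sum.cong[OF refl], rule sum.swap)
  finally show ?thesis .
qed


definition stk :: "nat \<Rightarrow> (nat \<Rightarrow> nat \<Rightarrow> complex) \<Rightarrow> nat \<Rightarrow> complex" where
  "stk Q w = (\<lambda>a. w (a div Q) (a mod Q))"

definition unstk :: "nat \<Rightarrow> (nat \<Rightarrow> complex) \<Rightarrow> nat \<Rightarrow> nat \<Rightarrow> complex" where
  "unstk Q v = (\<lambda>n p. v (n*Q + p))"

lemma stk_unstk: "Q > 0 \<Longrightarrow> stk Q (unstk Q v) a = v a"
  unfolding stk_def unstk_def by (simp add: mult.commute)

lemma sf_cong: "(\<And>a. a < K \<Longrightarrow> v a = v' a) \<Longrightarrow> sf K M v v = sf K M v' v'"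
  unfolding sf_def by (intro sum.cong refl) auto

lemma divmod_stack1: "p < (Q::nat) \<Longrightarrow> (n*Q + p) div Q = n"
  by simp
lemma divmod_stack2: "p < (Q::nat) \<Longrightarrow> (n*Q + p) mod Q = p"
  by simp
lemmas divmod_stack = divmod_stack1 divmod_stack2

lemma sf_stack:
  assumes Q: "Q > 0"
  shows "sf (N*Q) (Dmat N Q T h Es) (stk Q w) (stk Q w)
    = (\<Sum>p<Q. \<Sum>n<N. \<Sum>m<N. w n p * cnj (w m p) * Dblk N Q T h Es n m p p)"
proof -
  have "sf (N*Q) (Dmat N Q T h Es) (stk Q w) (stk Q w)
      = (\<Sum>i<N. \<Sum>p<Q. \<Sum>k<N. \<Sum>q<Q. cnj (w i p) * Dblk N Q T h Es k i p q * w k q)"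
    unfolding sf_def sum_stack Dmat_def stk_def by (simp add: divmod_stack)
  also have "\<dots> = (\<Sum>i<N. \<Sum>p<Q. \<Sum>k<N. cnj (w i p) * Dblk N Q T h Es k i p p * w k p)"
  proof (intro sum.cong refl)
    fix i p k assume p: "p \<in> {..<Q}"
    have "(\<Sum>q<Q. cnj (w i p) * Dblk N Q T h Es k i p q * w k q) = (\<Sum>q<Q. if q = p then cnj (w i p) * Dblk N Q T h Es k i p p * w k p else 0)"
      unfolding Dblk_def diagm_def by (intro sum.cong refl) auto
    then show "(\<Sum>q<Q. cnj (w i p) * Dblk N Q T h Es k i p q * w k q) = cnj (w i p) * Dblk N Q T h Es k i p p * w k p"
      using p by simp
  qed
  also have "\<dots> = (\<Sum>p<Q. \<Sum>i<N. \<Sum>k<N. cnj (w i p) * Dblk N Q T h Es k i p p * w k p)"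
    by (rule sum.swap)
  also have "\<dots> = (\<Sum>p<Q. \<Sum>k<N. \<Sum>i<N. cnj (w i p) * Dblk N Q T h Es k i p p * w k p)"
    by (rule sum.cong[OF refl], rule sum.swap)
  also have "\<dots> = (\<Sum>p<Q. \<Sum>n<N. \<Sum>m<N. w n p * cnj (w m p) * Dblk N Q T h Es n m p p)"
    by (simp add: mult_ac)
  finally show ?thesis .
qed

lemma ip_stack:
  assumes Q: "Q > 0"
  shows "ip (N*Q) (stk Q w) (\<lambda>a. e (a div Q) (a mod Q)) = (\<Sum>p<Q. \<Sum>n<N. cnj (w n p) * e n p)"
proof -
  have "ip (N*Q) (stk Q w) (\<lambda>a. e (a div Q) (a mod Q)) = (\<Sum>n<N. \<Sum>p<Q. cnj (w n p) * e n p)"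
    unfolding ip_def sum_stack stk_def by (simp add: divmod_stack)
  also have "\<dots> = (\<Sum>p<Q. \<Sum>n<N. cnj (w n p) * e n p)" by (rule sum.swap)
  finally show ?thesis .
qed

definition ehat :: "nat \<Rightarrow> nat \<Rightarrow> nat \<Rightarrow> (nat \<Rightarrow> nat \<Rightarrow> complex) \<Rightarrow> real \<Rightarrow> nat \<Rightarrow> nat \<Rightarrow> complex" where
  "ehat N Q T h Es n p = (\<Sum>q<Q. cnj (dft Q p q) * cnj (\<integral>\<omega>. rq Q T h Es \<omega> n q * cnj (xt Es \<omega> p) \<partial>Omega N Q))"

definition uvec :: "nat \<Rightarrow> nat \<Rightarrow> nat \<Rightarrow> (nat \<Rightarrow> nat \<Rightarrow> complex) \<Rightarrow> real \<Rightarrow> nat \<Rightarrow> complex" where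
  "uvec N Q T h Es a = ehat N Q T h Es (a div Q) (a mod Q) / complex_of_real (sqrt (real Q * Es))"

lemma den_real:
  "complex_of_real (\<integral>\<omega>. (\<Sum>p<Q. (cmod (xhat N Q T h Es w \<omega> p))\<^sup>2) \<partial>Omega N Q)
    = sf (N*Q) (Dmat N Q T h Es) (stk Q w) (stk Q w)" if "Q > 0"
  unfolding den_formula sf_stack[OF that] ..

lemma Delta_form:
  assumes Q: "Q > 0" and Es: "Es > 0"
  shows "Delta N Q T h Es w = (cmod (ip (N*Q) (stk Q w) (uvec N Q T h Es)))\<^sup>2 / Re (sf (N*Q) (Dmat N Q T h Es) (stk Q w) (stk Q w))"
proof -
  let ?s = "sqrt (real Q * Es)"
  have s0: "?s > 0" using Q Es by simp
  have num: "(\<integral>\<omega>. (\<Sum>p<Q. cnj (xhat N Q T h Es w \<omega> p) * xt Es \<omega> p) \<partial>Omega N Q)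
      = complex_of_real ?s * ip (N*Q) (stk Q w) (uvec N Q T h Es)"
  proof -
    have "(\<integral>\<omega>. (\<Sum>p<Q. cnj (xhat N Q T h Es w \<omega> p) * xt Es \<omega> p) \<partial>Omega N Q)
        = ip (N*Q) (stk Q w) (\<lambda>a. ehat N Q T h Es (a div Q) (a mod Q))"
      unfolding num_formula ehat_def by (rule ip_stack[OF Q, symmetric])
    also have "\<dots> = complex_of_real ?s * ip (N*Q) (stk Q w) (uvec N Q T h Es)"
      unfolding ip_def uvec_def using s0 Q Es by (simp add: sum_distrib_left mult_ac)
    finally show ?thesis .
  qed
  have den: "(\<integral>\<omega>. (\<Sum>p<Q. (cmod (xhat N Q T h Es w \<omega> p))\<^sup>2) \<partial>Omega N Q) = Re (sf (N*Q) (Dmat N Q T h Es) (stk Q w) (stk Q w))"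
    using arg_cong[OF den_real[OF Q, of N T h Es w], of Re] by simp
  have "Delta N Q T h Es w = (?s * cmod (ip (N*Q) (stk Q w) (uvec N Q T h Es)))\<^sup>2
      / (real Q * Es * Re (sf (N*Q) (Dmat N Q T h Es) (stk Q w) (stk Q w)))"
    unfolding Delta_def num den using s0 by (simp add: norm_mult)
  also have "\<dots> = (cmod (ip (N*Q) (stk Q w) (uvec N Q T h Es)))\<^sup>2 / Re (sf (N*Q) (Dmat N Q T h Es) (stk Q w) (stk Q w))"
    using s0 Q Es by (simp add: power_mult_distrib)
  finally show ?thesis .
qed

lemma psd_model:
  assumes Q: "Q > 0"
  shows "Im (sf (N*Q) (Dmat N Q T h Es) v v) = 0" "Re (sf (N*Q) (Dmat N Q T h Es) v v) \<ge> 0"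
proof -
  have e: "sf (N*Q) (Dmat N Q T h Es) v v = sf (N*Q) (Dmat N Q T h Es) (stk Q (unstk Q v)) (stk Q (unstk Q v))"
    by (rule sf_cong) (simp add: stk_unstk[OF Q])
  have "sf (N*Q) (Dmat N Q T h Es) v v = complex_of_real (\<integral>\<omega>. (\<Sum>p<Q. (cmod (xhat N Q T h Es (unstk Q v) \<omega> p))\<^sup>2) \<partial>Omega N Q)"
    unfolding e den_real[OF Q] ..
  moreover have "(\<integral>\<omega>. (\<Sum>p<Q. (cmod (xhat N Q T h Es (unstk Q v) \<omega> p))\<^sup>2) \<partial>Omega N Q) \<ge> 0"
    by (intro integral_nonneg_AE AE_I2 sum_nonneg) auto
  ultimately show "Im (sf (N*Q) (Dmat N Q T h Es) v v) = 0" "Re (sf (N*Q) (Dmat N Q T h Es) v v) \<ge> 0"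
    by simp_all
qed


lemma ehat_val:
  fixes T :: nat and h :: "nat \<Rightarrow> nat \<Rightarrow> complex"
  assumes Q: "Q > 0" and Es: "Es \<ge> 0" and n: "n < N" and p: "p < Q"
  defines "V \<equiv> (\<Sum>q<Q. (cmod (lam Q T h n q))\<^sup>2)"
  shows "ehat N Q T h Es n p = complex_of_real (Es / (sqrt pi * sqrt (Es/2 * (V / real Q) + 1/2))) * cnj (lam Q T h n p)"
proof -
  define S where "S = Es/2 * (V / real Q) + 1/2"
  define c where "c = 2 / (sqrt pi * sqrt S)"
  have Sq: "Es/2 * (\<Sum>q'<Q. (cmod (Amat Q T h n q q'))\<^sup>2) + 1/2 = S" if "q < Q" for q
  proof -
    have "(\<Sum>q'<Q. (cmod (Amat Q T h n q q'))\<^sup>2) = (\<Sum>q'<Q. (1 / real Q) * (cmod (lam Q T h n q'))\<^sup>2)"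
      by (intro sum.cong refl) (simp add: Amat_simp[OF Q that] norm_mult power_mult_distrib dft_adj_sq[OF Q])
    also have "\<dots> = V / real Q" unfolding V_def by (simp add: sum_divide_distrib)
    finally show ?thesis unfolding S_def by simp
  qed
  have tm: "cnj (dft Q p q) * cnj (\<integral>\<omega>. rq Q T h Es \<omega> n q * cnj (xt Es \<omega> p) \<partial>Omega N Q)
      = complex_of_real (c * (Es/2) * (1 / real Q)) * cnj (lam Q T h n p)" if q: "q < Q" for q
  proof -
    have "(\<integral>\<omega>. rq Q T h Es \<omega> n q * cnj (xt Es \<omega> p) \<partial>Omega N Q)
        = complex_of_real c * (complex_of_real (Es/2) * (cnj (dft Q p q) * lam Q T h n p))"
      unfolding E_r_xt[OF Es n q p] Sq[OF q] c_def Amat_simp[OF Q q p] dft_adj_def ..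
    then have "cnj (dft Q p q) * cnj (\<integral>\<omega>. rq Q T h Es \<omega> n q * cnj (xt Es \<omega> p) \<partial>Omega N Q)
        = cnj (dft Q p q) * cnj (complex_of_real c * (complex_of_real (Es/2) * (cnj (dft Q p q) * lam Q T h n p)))"
      by (simp only:)
    also have "\<dots> = complex_of_real (c * (Es/2)) * (dft Q p q * cnj (dft Q p q)) * cnj (lam Q T h n p)"
      by (simp add: mult_ac)
    also have "dft Q p q * cnj (dft Q p q) = complex_of_real (1 / real Q)"
      using complex_norm_square[of "dft Q p q"] dft_sq[OF Q] by simp
    finally show ?thesis by (simp add: mult_ac)
  qed
  have "ehat N Q T h Es n p = (\<Sum>q<Q. complex_of_real (c * (Es/2) * (1 / real Q)) * cnj (lam Q T h n p))"
    unfolding ehat_def by (intro sum.cong refl) (simp add: tm)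
  also have "\<dots> = complex_of_real (c * (Es/2)) * cnj (lam Q T h n p)"
    using Q by simp
  also have "c * (Es/2) = Es / (sqrt pi * sqrt S)" unfolding c_def by simp
  finally show ?thesis unfolding S_def .
qed

lemma uvec_lim:
  assumes Q: "Q > 0" and n: "n < N" and p: "p < Q"
    and V: "(\<Sum>q<Q. (cmod (lam Q T h n q))\<^sup>2) > 0"
  shows "((\<lambda>E. uvec N Q T h E (n*Q + p)) \<longlongrightarrow>
      complex_of_real (sqrt (2/pi) / vnorm Q (lam Q T h n)) * cnj (lam Q T h n p)) at_top"
proof -
  define V where "V = (\<Sum>q<Q. (cmod (lam Q T h n q))\<^sup>2)"
  have V0: "V > 0" using V unfolding V_def .
  define g where "g = (\<lambda>E::real. 1 / (sqrt pi * sqrt (V/2 + real Q * (1/2) * inverse E)))"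
  have ev: "eventually (\<lambda>E. uvec N Q T h E (n*Q + p) = complex_of_real (g E) * cnj (lam Q T h n p)) at_top"
    using eventually_gt_at_top[of 0]
  proof eventually_elim
    case (elim E)
    then have E: "E > 0" .
    define S where "S = E/2 * (V / real Q) + 1/2"
    have S0: "S > 0" unfolding S_def using E V0 Q by (simp add: add_pos_nonneg)
    have prod: "S * (real Q * E) = E\<^sup>2 * (V/2 + real Q * (1/2) * inverse E)"
      unfolding S_def using E Q by (simp add: field_simps power2_eq_square)
    have sq: "sqrt S * sqrt (real Q * E) = E * sqrt (V/2 + real Q * (1/2) * inverse E)"
    proof -
      have "sqrt S * sqrt (real Q * E) = sqrt (S * (real Q * E))" by (rule real_sqrt_mult[symmetric])
      also have "\<dots> = sqrt (E\<^sup>2) * sqrt (V/2 + real Q * (1/2) * inverse E)" unfolding prod by (rule real_sqrt_mult)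
      also have "sqrt (E\<^sup>2) = E" using E by simp
      finally show ?thesis .
    qed
    have pos: "sqrt (V/2 + real Q * (1/2) * inverse E) > 0" using V0 E by (simp add: add_pos_nonneg)
    have "uvec N Q T h E (n*Q + p) = complex_of_real (E / (sqrt pi * sqrt S)) * cnj (lam Q T h n p) / complex_of_real (sqrt (real Q * E))"
      unfolding uvec_def divmod_stack[OF p] ehat_val[OF Q less_imp_le[OF E] n p] S_def V_def ..
    also have "\<dots> = complex_of_real (E / (sqrt pi * sqrt S) / sqrt (real Q * E)) * cnj (lam Q T h n p)"
      by (simp only: of_real_divide) (simp add: divide_inverse mult_ac)
    also have "E / (sqrt pi * sqrt S) / sqrt (real Q * E) = g E"
    proof -
      have "E / (sqrt pi * sqrt S) / sqrt (real Q * E) = E / (sqrt pi * (sqrt S * sqrt (real Q * E)))"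
        by (simp add: divide_divide_eq_left mult.assoc)
      also have "\<dots> = E / (sqrt pi * (E * sqrt (V/2 + real Q * (1/2) * inverse E)))" unfolding sq ..
      also have "\<dots> = E / (E * (sqrt pi * sqrt (V/2 + real Q * (1/2) * inverse E)))" by (simp only: mult_ac)
      also have "\<dots> = g E" unfolding g_def using E by (rule nonzero_divide_mult_cancel_left[OF less_imp_neq[symmetric]])
      finally show ?thesis .
    qed
    finally show ?case .
  qed
  have glim: "(g \<longlongrightarrow> 1 / (sqrt pi * sqrt (V/2 + real Q * (1/2) * 0))) at_top"
    unfolding g_def
    by (intro tendsto_divide tendsto_mult tendsto_real_sqrt tendsto_add tendsto_const tendsto_inverse_0_at_top filterlim_ident)
      (use V0 in auto)
  have "1 / (sqrt pi * sqrt (V/2 + real Q * (1/2) * 0)) = sqrt (2/pi) / vnorm Q (lam Q T h n)"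
  proof -
    have "vnorm Q (lam Q T h n) = sqrt V" unfolding vnorm_def V_def ..
    moreover have "1 / (sqrt pi * sqrt (V/2)) = sqrt (2/pi) / sqrt V"
      using V0 by (simp add: real_sqrt_divide field_simps)
    ultimately show ?thesis by simp
  qed
  with glim have glim': "(g \<longlongrightarrow> sqrt (2/pi) / vnorm Q (lam Q T h n)) at_top" by simp
  have "((\<lambda>E. complex_of_real (g E) * cnj (lam Q T h n p)) \<longlongrightarrow>
      complex_of_real (sqrt (2/pi) / vnorm Q (lam Q T h n)) * cnj (lam Q T h n p)) at_top"
    by (intro tendsto_mult tendsto_of_real glim' tendsto_const)
  then show ?thesis by (subst tendsto_cong[OF ev])
qed


lemma ip_cong1: "(\<And>a. a < K \<Longrightarrow> v a = v' a) \<Longrightarrow> ip K v u = ip K v' u"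
  unfolding ip_def by (intro sum.cong refl) auto

theorem corollary4:
  fixes N Q T :: nat and h :: "nat \<Rightarrow> nat \<Rightarrow> complex"
    and Dbar :: "nat \<Rightarrow> nat \<Rightarrow> complex"
    and wopt :: "real \<Rightarrow> nat \<Rightarrow> nat \<Rightarrow> complex"
  assumes "N \<ge> 1" and "Q \<ge> 1" and "1 \<le> T" and "T \<le> Q"
    and lam_nz: "\<forall>n<N. \<exists>q<Q. lam Q T h n q \<noteq> 0"
    and Dbar_lim: "\<forall>a<N*Q. \<forall>b<N*Q. ((\<lambda>Es. Dmat N Q T h Es a b) \<longlongrightarrow> Dbar a b) at_top"
    and Dbar_inv: "invertible_sq (N*Q) Dbar"
    and wopt_max: "\<forall>Es>0. \<forall>w. Delta N Q T h Es w \<le> Delta N Q T h Es (wopt Es)"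
  shows "((\<lambda>Es. complex_of_real (Delta N Q T h Es (wopt Es))) \<longlongrightarrow>
           complex_of_real (2 / pi) *
             (\<Sum>a<N*Q. \<Sum>b<N*Q. lambar Q T h a * inv_sq (N*Q) Dbar a b * cnj (lambar Q T h b)))
         at_top"
proof -
  have Q0: "Q > 0" using assms(2) by simp
  have N0: "N > 0" using assms(1) by simp
  define K where "K = N*Q"
  define B where "B = (SOME B. is_inverse K Dbar B)"
  have inv: "is_inverse K Dbar B"
    unfolding B_def using Dbar_inv unfolding invertible_sq_def K_def by (rule someI_ex)
  define ubar where "ubar = (\<lambda>a. complex_of_real (sqrt (2/pi) / vnorm Q (lam Q T h (a div Q))) * cnj (lam Q T h (a div Q) (a mod Q)))"
  define Dl where "Dl = (\<lambda>E. Delta N Q T h E (wopt E))"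
  have Vpos: "(\<Sum>q<Q. (cmod (lam Q T h n q))\<^sup>2) > 0" if nN: "n < N" for n
  proof -
    obtain q where q: "q < Q" "lam Q T h n q \<noteq> 0" using lam_nz nN by blast
    have "(cmod (lam Q T h n q))\<^sup>2 \<le> (\<Sum>q<Q. (cmod (lam Q T h n q))\<^sup>2)"
      using q by (intro member_le_sum) auto
    moreover have "(cmod (lam Q T h n q))\<^sup>2 > 0" using q by simp
    ultimately show ?thesis by linarith
  qed
  have ulim: "((\<lambda>E. uvec N Q T h E a) \<longlongrightarrow> ubar a) at_top" if a: "a < K" for a
  proof -
    have n: "a div Q < N" using a Q0 unfolding K_def by (simp add: less_mult_imp_div_less)
    have p: "a mod Q < Q" using Q0 by simp
    have e: "a = (a div Q) * Q + a mod Q" by simp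
    show ?thesis unfolding ubar_def using uvec_lim[OF Q0 n p Vpos[OF n]] e by metis
  qed
  have Dlim: "((\<lambda>E. Dmat N Q T h E a b) \<longlongrightarrow> Dbar a b) at_top" if "a < K" "b < K" for a b
    using Dbar_lim that unfolding K_def by blast
  obtain q0 where q0: "q0 < Q" "lam Q T h 0 q0 \<noteq> 0" using lam_nz N0 by blast
  have unz: "q0 < K" "ubar q0 \<noteq> 0"
  proof -
    show "q0 < K" using q0 assms(1) unfolding K_def by (metis less_le_trans mult_1 mult_le_mono1)
    have "vnorm Q (lam Q T h 0) > 0" unfolding vnorm_def using Vpos[OF N0] by simp
    then show "ubar q0 \<noteq> 0" unfolding ubar_def using q0 by simp
  qed
  have upper: "(cmod (ip K v (uvec N Q T h E)))\<^sup>2 / Re (sf K (Dmat N Q T h E) v v) \<le> Dl E" if E: "E > 0" for E v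
  proof -
    have "(cmod (ip K v (uvec N Q T h E)))\<^sup>2 / Re (sf K (Dmat N Q T h E) v v) = Delta N Q T h E (unstk Q v)"
      unfolding Delta_form[OF Q0 E] K_def
      by (simp add: ip_cong1[of "N*Q" "stk Q (unstk Q v)" v] sf_cong[of "N*Q" "stk Q (unstk Q v)" v] stk_unstk[OF Q0])
    also have "\<dots> \<le> Dl E" unfolding Dl_def using wopt_max E by blast
    finally show ?thesis .
  qed
  have att: "\<exists>v. Dl E = (cmod (ip K v (uvec N Q T h E)))\<^sup>2 / Re (sf K (Dmat N Q T h E) v v)" if E: "E > 0" for E
    unfolding Dl_def K_def Delta_form[OF Q0 E] by blast
  have lim: "(Dl \<longlongrightarrow> Re (sf K Dbar (mv K B ubar) (mv K B ubar))) at_top"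
    by (rule partB[OF inv Dlim ulim _ _ unz upper att]) (auto simp: K_def psd_model[OF Q0])
  have real: "Im (sf K Dbar v v) = 0" for v
  proof -
    have l1: "((\<lambda>E. Im (sf K (Dmat N Q T h E) v v)) \<longlongrightarrow> Im (sf K Dbar v v)) at_top"
      by (intro tendsto_Im sf_tendsto Dlim tendsto_const)
    have "((\<lambda>E. Im (sf K (Dmat N Q T h E) v v)) \<longlongrightarrow> 0) at_top"
      unfolding K_def psd_model[OF Q0] by simp
    then show ?thesis using tendsto_unique[OF _ l1] by simp
  qed
  have val: "(\<Sum>a<K. \<Sum>b<K. cnj (ubar a) * B a b * ubar b) = complex_of_real (Re (sf K Dbar (mv K B ubar) (mv K B ubar)))"
    by (rule partB_value[OF inv real])
  have target: "complex_of_real (2 / pi) * (\<Sum>a<N*Q. \<Sum>b<N*Q. lambar Q T h a * inv_sq (N*Q) Dbar a b * cnj (lambar Q T h b))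
      = (\<Sum>a<K. \<Sum>b<K. cnj (ubar a) * B a b * ubar b)"
  proof -
    let ?s = "complex_of_real (sqrt (2/pi))"
    have ss: "?s * ?s = complex_of_real (2/pi)" by (simp flip: of_real_mult)
    have Beq: "inv_sq K Dbar a b = B a b" if "a < K" "b < K" for a b
      unfolding inv_sq_def B_def using that by simp
    have s1: "(\<Sum>a<K. \<Sum>b<K. lambar Q T h a * inv_sq K Dbar a b * cnj (lambar Q T h b))
        = (\<Sum>a<K. \<Sum>b<K. lambar Q T h a * B a b * cnj (lambar Q T h b))"
      by (intro sum.cong refl) (simp add: Beq)
    have "complex_of_real (2 / pi) * (\<Sum>a<K. \<Sum>b<K. lambar Q T h a * inv_sq K Dbar a b * cnj (lambar Q T h b))
        = (\<Sum>a<K. \<Sum>b<K. (?s * lambar Q T h a) * B a b * (?s * cnj (lambar Q T h b)))"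
      unfolding s1 sum_distrib_left ss[symmetric]
      by (intro sum.cong refl) (simp add: mult_ac)
    also have "\<dots> = (\<Sum>a<K. \<Sum>b<K. cnj (ubar a) * B a b * ubar b)"
      unfolding ubar_def lambar_def by (intro sum.cong refl) (simp add: of_real_divide)
    finally show ?thesis unfolding K_def .
  qed
  show ?thesis
    unfolding target val
    using tendsto_of_real[OF lim] unfolding Dl_def .
qed

end
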